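(* Let $G$ be a finite graph and $e$ a pendant edge of $G$ (an edge one of whose endpoints has degree one). Then for each $i$, $H^i(G)\cong H^i(G/e)\{1\}$ as graded abelian groups.
   Context: Graphs are finite; loops and multiple edges allowed. $G/e$ is $G$ with $e$ contracted to a point. For a graded module $\mathcal{M}=\bigoplus_jM_j$, the shift $\mathcal{M}\{\ell\}$ has $\mathcal{M}\{\ell\}_j=M_{j-\ell}$. For $G=(V,E)$ and $s\subseteq E$, $[G:s]$ is the spanning subgraph with edge set $s$. With $1*1=1$, $1*x=x*1=x$, $x*x=0$: an enhanced state is $S=(s,c)$, $s\subseteq E$, $c$ assigning $1$ or $x$ to each component of $[G:s]$; $i(S)=|s|$, $j(S)=$ number of components colored $x$. $C^{i,j}(G)$ is free abelian on enhanced states with $i(S)=i,j(S)=j$; $C^i(G)=\bigoplus_jC^{i,j}(G)$, graded by $j$. For an ordering of the edges, $d(S)=\sum_{e'\in E\setminus s}(-1)^{n(e')}S_{e'}$, $n(e')$ the number of edges of $s$ ordered before $e'$; $S_{e'}=(s\cup\{e'\},c_{e'})$ where, if $e'$ joins a component to itself, colors are unchanged, and if $e'$ joins distinct components $E_1,E_2$ the merged component gets $c(E_1)*c(E_2)$ (and $S_{e'}=0$ if this product is $0$). $H^i(G)=\bigoplus_jH^{i,j}(G)$ is the cohomology, graded by $j$. *)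

theory Defs
  imports "HOL-Algebra.Coset"
begin

text \<open>A graph: vertex set, edge set, and for each edge the set of its endpoints
(one endpoint for a loop, two for an ordinary edge).\<close>
record ('v, 'e) graph =
  verts :: "'v set"
  edges :: "'e set"
  ends  :: "'e \<Rightarrow> 'v set"

definition wf_graph :: "('v, 'e) graph \<Rightarrow> bool" where
  "wf_graph G \<longleftrightarrow> finite (verts G) \<and> finite (edges G) \<and>
     (\<forall>f \<in> edges G. ends G f \<subseteq> verts G \<and> 1 \<le> card (ends G f) \<and> card (ends G f) \<le> 2)"

definition degree :: "('v, 'e) graph \<Rightarrow> 'v \<Rightarrow> nat" where
  "degree G v = card {f \<in> edges G. v \<in> ends G f \<and> card (ends G f) = 2}
              + 2 * card {f \<in> edges G. ends G f = {v}}"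

definition pendant_edge :: "('v, 'e) graph \<Rightarrow> 'e \<Rightarrow> bool" where
  "pendant_edge G e \<longleftrightarrow> e \<in> edges G \<and> (\<exists>v \<in> ends G e. degree G v = 1)"

text \<open>Contraction G/e: the endpoints of e are identified into a single vertex.
Vertices of G/e are the classes of the vertices of G (singletons, except
the class ends G e).\<close>
definition vclass :: "('v, 'e) graph \<Rightarrow> 'e \<Rightarrow> 'v \<Rightarrow> 'v set" where
  "vclass G e x = (if x \<in> ends G e then ends G e else {x})"

definition contract :: "('v, 'e) graph \<Rightarrow> 'e \<Rightarrow> ('v set, 'e) graph" where
  "contract G e = \<lparr> verts = vclass G e ` verts G,
                    edges = edges G - {e},
                    ends = (\<lambda>f. vclass G e ` ends G f) \<rparr>"

definition adj_in :: "('v, 'e) graph \<Rightarrow> 'e set \<Rightarrow> 'v \<Rightarrow> 'v \<Rightarrow> bool" where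
  "adj_in G s x y \<longleftrightarrow> (\<exists>f \<in> s. x \<in> ends G f \<and> y \<in> ends G f)"

definition conn_rel :: "('v, 'e) graph \<Rightarrow> 'e set \<Rightarrow> ('v \<times> 'v) set" where
  "conn_rel G s = {(x, y). x \<in> verts G \<and> y \<in> verts G \<and> (adj_in G s)\<^sup>*\<^sup>* x y}"

definition comps :: "('v, 'e) graph \<Rightarrow> 'e set \<Rightarrow> 'v set set" where
  "comps G s = verts G // conn_rel G s"

text \<open>An enhanced state is a pair (s, c); c Q = True means component Q is colored x,
c Q = False means colored 1. c is normalised to False outside the components.\<close>
type_synonym ('v, 'e) estate = "'e set \<times> ('v set \<Rightarrow> bool)"

definition states :: "('v, 'e) graph \<Rightarrow> ('v, 'e) estate set" where
  "states G = {(s, c). s \<subseteq> edges G \<and> (\<forall>Q. Q \<notin> comps G s \<longrightarrow> \<not> c Q)}"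

definition ideg :: "('v, 'e) estate \<Rightarrow> int" where
  "ideg S = int (card (fst S))"

definition jdeg :: "('v, 'e) graph \<Rightarrow> ('v, 'e) estate \<Rightarrow> int" where
  "jdeg G S = int (card {Q \<in> comps G (fst S). snd S Q})"

text \<open>The state S_{e'}: None represents 0 (product x*x = 0).
T is the set of components of [G:s] met by e' (one or two of them).\<close>
definition add_edge :: "('v, 'e) graph \<Rightarrow> ('v, 'e) estate \<Rightarrow> 'e \<Rightarrow> ('v, 'e) estate option" where
  "add_edge G S e' =
     (let s = fst S; c = snd S;
          T = {Q \<in> comps G s. Q \<inter> ends G e' \<noteq> {}};
          M = \<Union>T
      in if card T \<ge> 2 \<and> (\<forall>Q \<in> T. c Q) then None
         else Some (insert e' s,
                    (\<lambda>Q. if Q = M then (\<exists>Q' \<in> T. c Q') else if Q \<in> T then False else c Q)))"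

text \<open>Edge ordering given by a map r, injective on the edges; n(e') counts the
edges of s ordered before e'.\<close>
definition nbefore :: "('e \<Rightarrow> nat) \<Rightarrow> 'e set \<Rightarrow> 'e \<Rightarrow> nat" where
  "nbefore r s e' = card {f \<in> s. r f < r e'}"

type_synonym ('v, 'e) chain = "('v, 'e) estate \<Rightarrow> int"

text \<open>C^{i,j}(G): the free abelian group on enhanced states of bidegree (i,j),
realised as integer functions supported on those states.\<close>
definition chains :: "('v, 'e) graph \<Rightarrow> int \<Rightarrow> int \<Rightarrow> ('v, 'e) chain set" where
  "chains G i j = {\<phi>. \<forall>S. \<phi> S \<noteq> 0 \<longrightarrow> S \<in> states G \<and> ideg S = i \<and> jdeg G S = j}"

definition diff :: "('v, 'e) graph \<Rightarrow> ('e \<Rightarrow> nat) \<Rightarrow> ('v, 'e) chain \<Rightarrow> ('v, 'e) chain" where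
  "diff G r \<phi> = (\<lambda>T. \<Sum>S \<in> states G. \<Sum>e' \<in> edges G - fst S.
       (case add_edge G S e' of
          None \<Rightarrow> 0
        | Some T' \<Rightarrow> (if T' = T then (-1) ^ nbefore r (fst S) e' * \<phi> S else 0)))"

definition cycles :: "('v, 'e) graph \<Rightarrow> ('e \<Rightarrow> nat) \<Rightarrow> int \<Rightarrow> int \<Rightarrow> ('v, 'e) chain set" where
  "cycles G r i j = {\<phi> \<in> chains G i j. diff G r \<phi> = (\<lambda>_. 0)}"

definition boundaries :: "('v, 'e) graph \<Rightarrow> ('e \<Rightarrow> nat) \<Rightarrow> int \<Rightarrow> int \<Rightarrow> ('v, 'e) chain set" where
  "boundaries G r i j = diff G r ` chains G (i - 1) j"

definition cycle_group :: "('v, 'e) graph \<Rightarrow> ('e \<Rightarrow> nat) \<Rightarrow> int \<Rightarrow> int \<Rightarrow> ('v, 'e) chain monoid" where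
  "cycle_group G r i j = \<lparr> carrier = cycles G r i j, mult = (\<lambda>x y S. x S + y S), one = (\<lambda>_. 0) \<rparr>"

text \<open>H^{i,j}(G), the degree-j part of H^i(G), as an (abelian) group.\<close>
definition cohom :: "('v, 'e) graph \<Rightarrow> ('e \<Rightarrow> nat) \<Rightarrow> int \<Rightarrow> int \<Rightarrow> ('v, 'e) chain set monoid" where
  "cohom G r i j = cycle_group G r i j Mod boundaries G r i j"

end

theory Submission
  imports Defs
begin

definition addsub :: "('a \<Rightarrow> int) set \<Rightarrow> bool" where
  "addsub B \<longleftrightarrow> (\<lambda>_. 0) \<in> B \<and> (\<forall>x\<in>B. \<forall>y\<in>B. (\<lambda>S. x S + y S) \<in> B) \<and> (\<forall>x\<in>B. (\<lambda>S. - x S) \<in> B)"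

definition pmon :: "('a \<Rightarrow> int) set \<Rightarrow> ('a \<Rightarrow> int) monoid" where
  "pmon C = \<lparr>carrier = C, mult = (\<lambda>x y S. x S + y S), one = (\<lambda>_. 0)\<rparr>"

lemma rcoset_pmon: "r_coset (pmon C) B a = (\<lambda>b S. b S + a S) ` B"
  by (auto simp: r_coset_def pmon_def)

lemma addsub_zero: "addsub B \<Longrightarrow> (\<lambda>_. 0) \<in> B"
  by (simp add: addsub_def)
lemma addsub_add: "addsub B \<Longrightarrow> x \<in> B \<Longrightarrow> y \<in> B \<Longrightarrow> (\<lambda>S. x S + y S) \<in> B"
  by (simp add: addsub_def)
lemma addsub_neg: "addsub B \<Longrightarrow> x \<in> B \<Longrightarrow> (\<lambda>S. - x S) \<in> B"
  by (simp add: addsub_def)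

lemma addsub_diff:
  assumes "addsub B" "x \<in> B" "y \<in> B" shows "(\<lambda>S. x S - y S) \<in> B"
  using addsub_add[OF assms(1,2) addsub_neg[OF assms(1,3)]] by simp

lemma img_mem: "y \<in> B \<Longrightarrow> f = (\<lambda>S. y S + c S) \<Longrightarrow> f \<in> (\<lambda>b S. b S + c S) ` B"
  by auto

lemma rcoset_eq_iff:
  assumes B: "addsub B"
  shows "(\<lambda>b S. b S + a S) ` B = (\<lambda>b S. b S + c S) ` B \<longleftrightarrow> (\<lambda>S. a S - c S) \<in> B"
proof
  assume eq: "(\<lambda>b S. b S + a S) ` B = (\<lambda>b S. b S + c S) ` B"
  have "(\<lambda>S. (\<lambda>_. 0::int) S + a S) \<in> (\<lambda>b S. b S + a S) ` B" using addsub_zero[OF B] by (rule imageI)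
  then have "a \<in> (\<lambda>b S. b S + c S) ` B" using eq by simp
  then obtain b where "b \<in> B" "a = (\<lambda>S. b S + c S)" by auto
  then show "(\<lambda>S. a S - c S) \<in> B" by simp
next
  assume d: "(\<lambda>S. a S - c S) \<in> B"
  have d2: "(\<lambda>S. c S - a S) \<in> B"
    using addsub_neg[OF B d] by simp
  show "(\<lambda>b S. b S + a S) ` B = (\<lambda>b S. b S + c S) ` B"
  proof safe
    fix b assume "b \<in> B"
    then have "(\<lambda>S. b S + (a S - c S)) \<in> B" using addsub_add[OF B _ d] by simp
    moreover have "(\<lambda>S. b S + a S) = (\<lambda>S. (\<lambda>S. b S + (a S - c S)) S + c S)" by auto
    ultimately show "(\<lambda>S. b S + a S) \<in> (\<lambda>b S. b S + c S) ` B" by (rule img_mem)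
  next
    fix b assume "b \<in> B"
    then have "(\<lambda>S. b S + (c S - a S)) \<in> B" using addsub_add[OF B _ d2] by simp
    moreover have "(\<lambda>S. b S + c S) = (\<lambda>S. (\<lambda>S. b S + (c S - a S)) S + a S)" by auto
    ultimately show "(\<lambda>S. b S + c S) \<in> (\<lambda>b S. b S + a S) ` B" by (rule img_mem)
  qed
qed

lemma carrier_pmon[simp]: "carrier (pmon C) = C" by (simp add: pmon_def)
lemma mult_pmon[simp]: "mult (pmon C) x y = (\<lambda>S. x S + y S)" by (simp add: pmon_def)

lemma set_mult_pmon:
  assumes B: "addsub B"
  shows "set_mult (pmon C) ((\<lambda>b S. b S + a S) ` B) ((\<lambda>b S. b S + c S) ` B) = (\<lambda>b S. b S + (a S + c S)) ` B"
proof (intro equalityI subsetI)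
  fix z assume "z \<in> set_mult (pmon C) ((\<lambda>b S. b S + a S) ` B) ((\<lambda>b S. b S + c S) ` B)"
  then obtain b1 b2 where b: "b1 \<in> B" "b2 \<in> B" "z = (\<lambda>S. b1 S + a S + (b2 S + c S))"
    unfolding set_mult_def by auto
  then have "(\<lambda>S. b1 S + b2 S) \<in> B" using addsub_add[OF B] by blast
  moreover have "z = (\<lambda>S. (\<lambda>S. b1 S + b2 S) S + (a S + c S))" using b by auto
  ultimately show "z \<in> (\<lambda>b S. b S + (a S + c S)) ` B" by (rule img_mem)
next
  fix z assume "z \<in> (\<lambda>b S. b S + (a S + c S)) ` B"
  then obtain b where b: "b \<in> B" "z = (\<lambda>S. b S + (a S + c S))" by auto
  have z: "(\<lambda>_. 0) \<in> B" using addsub_zero[OF B] .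
  have "z = mult (pmon C) (\<lambda>S. b S + a S) (\<lambda>S. (\<lambda>_. 0) S + c S)"
    using b by auto
  moreover have "(\<lambda>S. b S + a S) \<in> (\<lambda>b S. b S + a S) ` B" using b by blast
  moreover have "(\<lambda>S. (\<lambda>_. 0) S + c S) \<in> (\<lambda>b S. b S + c S) ` B" using z by (rule imageI)
  ultimately show "z \<in> set_mult (pmon C) ((\<lambda>b S. b S + a S) ` B) ((\<lambda>b S. b S + c S) ` B)"
    unfolding set_mult_def by blast
qed

lemma abstract_iso:
  fixes \<Phi> :: "('a \<Rightarrow> int) \<Rightarrow> ('b \<Rightarrow> int)"
  assumes C1: "addsub C1" and B1: "addsub B1" and B2: "addsub B2"
    and add: "\<And>x y. x \<in> C1 \<Longrightarrow> y \<in> C1 \<Longrightarrow> \<Phi> (\<lambda>S. x S + y S) = (\<lambda>S. \<Phi> x S + \<Phi> y S)"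
    and img: "\<Phi> ` C1 = C2"
    and bd: "\<And>x. x \<in> C1 \<Longrightarrow> \<Phi> x \<in> B2 \<longleftrightarrow> x \<in> B1"
  shows "pmon C1 Mod B1 \<cong> pmon C2 Mod B2"
proof -
  have sub: "\<And>x a. x \<in> C1 \<Longrightarrow> a \<in> C1 \<Longrightarrow> \<Phi> (\<lambda>S. x S - a S) = (\<lambda>S. \<Phi> x S - \<Phi> a S)"
  proof -
    fix x a assume x: "x \<in> C1" and a: "a \<in> C1"
    have xa: "(\<lambda>S. x S - a S) \<in> C1" using addsub_diff[OF C1 x a] .
    have "\<Phi> x = \<Phi> (\<lambda>S. a S + (\<lambda>S. x S - a S) S)" by simp
    also have "\<dots> = (\<lambda>S. \<Phi> a S + \<Phi> (\<lambda>S. x S - a S) S)" using add[OF a xa] .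
    finally show "\<Phi> (\<lambda>S. x S - a S) = (\<lambda>S. \<Phi> x S - \<Phi> a S)" by (auto simp: fun_eq_iff)
  qed
  define h where "h X = (\<lambda>b S. b S + \<Phi> (SOME x. x \<in> C1 \<and> X = (\<lambda>b S. b S + x S) ` B1) S) ` B2" for X
  have h: "h ((\<lambda>b S. b S + a S) ` B1) = (\<lambda>b S. b S + \<Phi> a S) ` B2" if a: "a \<in> C1" for a
  proof -
    let ?x = "SOME x. x \<in> C1 \<and> (\<lambda>b S. b S + a S) ` B1 = (\<lambda>b S. b S + x S) ` B1"
    have "?x \<in> C1 \<and> (\<lambda>b S. b S + a S) ` B1 = (\<lambda>b S. b S + ?x S) ` B1"
      by (rule someI[of _ a]) (use a in auto)
    then have x: "?x \<in> C1" and "(\<lambda>S. a S - ?x S) \<in> B1" using rcoset_eq_iff[OF B1] by auto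
    then have "\<Phi> (\<lambda>S. a S - ?x S) \<in> B2" using bd addsub_diff[OF C1 a x] by blast
    then have "(\<lambda>S. \<Phi> a S - \<Phi> ?x S) \<in> B2" using sub[OF a x] by simp
    then have "(\<lambda>S. \<Phi> ?x S - \<Phi> a S) \<in> B2" using addsub_neg[OF B2] by fastforce
    then show ?thesis unfolding h_def using rcoset_eq_iff[OF B2] by simp
  qed
  have carr: "carrier (pmon C Mod B) = (\<lambda>a. (\<lambda>b S. b S + a S) ` B) ` C" for C :: "('c \<Rightarrow> int) set" and B
    by (auto simp: FactGroup_def RCOSETS_def rcoset_pmon)
  have "h \<in> iso (pmon C1 Mod B1) (pmon C2 Mod B2)"
  proof (rule isoI)
    show "h \<in> hom (pmon C1 Mod B1) (pmon C2 Mod B2)"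
    proof (rule homI)
      fix X assume "X \<in> carrier (pmon C1 Mod B1)"
      then obtain a where a: "a \<in> C1" "X = (\<lambda>b S. b S + a S) ` B1" unfolding carr by auto
      then show "h X \<in> carrier (pmon C2 Mod B2)" unfolding carr using h img by auto
    next
      fix X Y assume "X \<in> carrier (pmon C1 Mod B1)" "Y \<in> carrier (pmon C1 Mod B1)"
      then obtain a c where a: "a \<in> C1" "X = (\<lambda>b S. b S + a S) ` B1"
        and c: "c \<in> C1" "Y = (\<lambda>b S. b S + c S) ` B1" unfolding carr by auto
      have ac: "(\<lambda>S. a S + c S) \<in> C1" using C1 a c unfolding addsub_def by blast
      have "X \<otimes>\<^bsub>pmon C1 Mod B1\<^esub> Y = (\<lambda>b S. b S + (\<lambda>S. a S + c S) S) ` B1"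
        using set_mult_pmon[OF B1] a c by (simp add: FactGroup_def)
      then have "h (X \<otimes>\<^bsub>pmon C1 Mod B1\<^esub> Y) = (\<lambda>b S. b S + (\<Phi> a S + \<Phi> c S)) ` B2"
        using h[OF ac] add[OF a(1) c(1)] by simp
      also have "\<dots> = h X \<otimes>\<^bsub>pmon C2 Mod B2\<^esub> h Y"
        using set_mult_pmon[OF B2] a c h by (simp add: FactGroup_def)
      finally show "h (X \<otimes>\<^bsub>pmon C1 Mod B1\<^esub> Y) = h X \<otimes>\<^bsub>pmon C2 Mod B2\<^esub> h Y" .
    qed
    show "bij_betw h (carrier (pmon C1 Mod B1)) (carrier (pmon C2 Mod B2))"
      unfolding bij_betw_def
    proof
      show "inj_on h (carrier (pmon C1 Mod B1))"
      proof (rule inj_onI)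
        fix X Y assume "X \<in> carrier (pmon C1 Mod B1)" "Y \<in> carrier (pmon C1 Mod B1)" and eq: "h X = h Y"
        then obtain a c where a: "a \<in> C1" "X = (\<lambda>b S. b S + a S) ` B1"
          and c: "c \<in> C1" "Y = (\<lambda>b S. b S + c S) ` B1" unfolding carr by auto
        have "(\<lambda>S. \<Phi> a S - \<Phi> c S) \<in> B2" using eq h a c rcoset_eq_iff[OF B2] by simp
        then have "\<Phi> (\<lambda>S. a S - c S) \<in> B2" using sub[OF a(1) c(1)] by simp
        then have "(\<lambda>S. a S - c S) \<in> B1" using bd addsub_diff[OF C1 a(1) c(1)] by blast
        then show "X = Y" using a c rcoset_eq_iff[OF B1] by simp
      qed
      show "h ` carrier (pmon C1 Mod B1) = carrier (pmon C2 Mod B2)"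
        unfolding carr using h img by (auto simp: image_image)
    qed
  qed
  then show ?thesis unfolding is_iso_def by blast
qed

definition cls :: "('v,'e) graph \<Rightarrow> 'e set \<Rightarrow> 'v \<Rightarrow> 'v set" where
  "cls G s x = conn_rel G s `` {x}"
definition vcol :: "('v,'e) graph \<Rightarrow> ('v,'e) estate \<Rightarrow> 'v \<Rightarrow> bool" where
  "vcol G S x = snd S (cls G (fst S) x)"
definition mkstate :: "('v,'e) graph \<Rightarrow> 'e set \<Rightarrow> ('v \<Rightarrow> bool) \<Rightarrow> ('v,'e) estate" where
  "mkstate G s f = (s, \<lambda>Q. Q \<in> comps G s \<and> (\<exists>x\<in>Q. f x))"
definition touch :: "('v,'e) graph \<Rightarrow> 'e set \<Rightarrow> 'e \<Rightarrow> 'v \<Rightarrow> bool" where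
  "touch G s e' x \<longleftrightarrow> (\<exists>u\<in>ends G e'. (x,u) \<in> conn_rel G s)"

lemma wf_ends: "wf_graph G \<Longrightarrow> f \<in> edges G \<Longrightarrow> ends G f \<subseteq> verts G"
  by (auto simp: wf_graph_def)
lemma wf_ends_ne: "wf_graph G \<Longrightarrow> f \<in> edges G \<Longrightarrow> ends G f \<noteq> {}"
  unfolding wf_graph_def by (metis card.empty not_one_le_zero)
lemma wf_fin: "wf_graph G \<Longrightarrow> finite (verts G) \<and> finite (edges G)"
  by (auto simp: wf_graph_def)

lemma rtranclp_adj_sym: "(adj_in G s)\<^sup>*\<^sup>* x y \<Longrightarrow> (adj_in G s)\<^sup>*\<^sup>* y x"
proof (induction rule: rtranclp_induct)
  case base then show ?case by simp
next
  case (step y z)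
  then have "adj_in G s z y" by (auto simp: adj_in_def)
  then show ?case using step(3) by (rule converse_rtranclp_into_rtranclp)
qed

lemma equiv_conn: "equiv (verts G) (conn_rel G s)"
  unfolding equiv_def refl_on_def sym_def trans_def conn_rel_def
  by (auto intro: rtranclp_adj_sym rtranclp_trans)

lemma conn_refl: "x \<in> verts G \<Longrightarrow> (x,x) \<in> conn_rel G s"
  by (simp add: conn_rel_def)
lemma conn_sym: "(x,y) \<in> conn_rel G s \<Longrightarrow> (y,x) \<in> conn_rel G s"
  by (auto simp: conn_rel_def intro: rtranclp_adj_sym)
lemma conn_trans: "(x,y) \<in> conn_rel G s \<Longrightarrow> (y,z) \<in> conn_rel G s \<Longrightarrow> (x,z) \<in> conn_rel G s"
  by (auto simp: conn_rel_def intro: rtranclp_trans)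
lemma conn_verts: "(x,y) \<in> conn_rel G s \<Longrightarrow> x \<in> verts G \<and> y \<in> verts G"
  by (auto simp: conn_rel_def)
lemma conn_mono: "s \<subseteq> t \<Longrightarrow> (x,y) \<in> conn_rel G s \<Longrightarrow> (x,y) \<in> conn_rel G t"
proof -
  assume st: "s \<subseteq> t" and xy: "(x,y) \<in> conn_rel G s"
  have "adj_in G s \<le> adj_in G t" using st unfolding adj_in_def le_fun_def le_bool_def by blast
  then show ?thesis using xy unfolding conn_rel_def by (auto intro: rtranclp_mono[THEN predicate2D])
qed
lemma conn_step: "f \<in> s \<Longrightarrow> x \<in> ends G f \<Longrightarrow> y \<in> ends G f \<Longrightarrow> x \<in> verts G \<Longrightarrow> y \<in> verts G \<Longrightarrow> (x,y) \<in> conn_rel G s"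
  unfolding conn_rel_def by (auto intro!: r_into_rtranclp simp: adj_in_def)

lemma mem_cls: "y \<in> cls G s x \<longleftrightarrow> (x,y) \<in> conn_rel G s"
  by (simp add: cls_def)
lemma cls_eq_iff: "x \<in> verts G \<Longrightarrow> y \<in> verts G \<Longrightarrow> cls G s x = cls G s y \<longleftrightarrow> (x,y) \<in> conn_rel G s"
proof -
  assume xy: "x \<in> verts G" "y \<in> verts G"
  have "(x,y) \<in> conn_rel G s \<longleftrightarrow> cls G s x = cls G s y \<and> x \<in> verts G \<and> y \<in> verts G"
    unfolding cls_def by (rule equiv_class_eq_iff[OF equiv_conn])
  then show ?thesis using xy by simp
qed
lemma comps_iff: "Q \<in> comps G s \<longleftrightarrow> (\<exists>x\<in>verts G. Q = cls G s x)"
  unfolding comps_def quotient_def cls_def by blast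
lemma cls_in_comps: "x \<in> verts G \<Longrightarrow> cls G s x \<in> comps G s"
  unfolding comps_iff by blast
lemma comp_cls: assumes "Q \<in> comps G s" "x \<in> Q" shows "Q = cls G s x"
proof -
  from assms(1)[unfolded comps_iff] obtain z where z: "z \<in> verts G" "Q = cls G s z" by blast
  then have zx: "(z,x) \<in> conn_rel G s" using assms(2) by (simp add: mem_cls)
  have "x \<in> verts G" using conn_verts[OF zx] by simp
  with zx show ?thesis using z cls_eq_iff[of z G x s] by simp
qed
lemma cls_self: "x \<in> verts G \<Longrightarrow> x \<in> cls G s x"
  by (simp add: mem_cls conn_refl)
lemma finite_comps: "finite (verts G) \<Longrightarrow> finite (comps G s)"
  unfolding comps_def by (rule finite_quotient) (auto simp: conn_rel_def)

lemma vcol_conn: assumes "(x,y) \<in> conn_rel G (fst S)" shows "vcol G S x = vcol G S y"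
proof -
  have "x \<in> verts G" "y \<in> verts G" using conn_verts[OF assms] by auto
  then have "cls G (fst S) x = cls G (fst S) y" using cls_eq_iff[of x G y "fst S"] assms by simp
  then show ?thesis by (simp add: vcol_def)
qed

lemma state_out: "S \<in> states G \<Longrightarrow> Q \<notin> comps G (fst S) \<Longrightarrow> \<not> snd S Q"
  unfolding states_def by auto

lemma state_eqI:
  assumes "S1 \<in> states G" "S2 \<in> states G" "fst S1 = fst S2"
    and "\<And>x. x \<in> verts G \<Longrightarrow> vcol G S1 x = vcol G S2 x"
  shows "S1 = S2"
proof -
  have "snd S1 Q = snd S2 Q" for Q
  proof (cases "Q \<in> comps G (fst S1)")
    case True
    from True[unfolded comps_iff] obtain x where "x \<in> verts G" "Q = cls G (fst S1) x" by blast
    then show ?thesis using assms(3) assms(4)[of x] by (simp add: vcol_def)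
  next
    case False
    then show ?thesis using state_out[OF assms(1)] state_out[OF assms(2)] assms(3) by metis
  qed
  then show ?thesis using assms(3) by (simp add: prod_eq_iff fun_eq_iff)
qed

lemma mkstate_state: "s \<subseteq> edges G \<Longrightarrow> mkstate G s f \<in> states G"
  by (simp add: mkstate_def states_def)
lemma fst_mkstate[simp]: "fst (mkstate G s f) = s"
  by (simp add: mkstate_def)
lemma vcol_mkstate:
  assumes x: "x \<in> verts G" and f: "\<And>y z. (y,z) \<in> conn_rel G s \<Longrightarrow> f y = f z"
  shows "vcol G (mkstate G s f) x = f x"
proof -
  have "(\<exists>y\<in>cls G s x. f y) \<longleftrightarrow> f x"
    using cls_self[OF x] f by (auto simp: mem_cls)
  then show ?thesis using cls_in_comps[OF x] unfolding vcol_def mkstate_def by simp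
qed

lemma states_fst: "S \<in> states G \<Longrightarrow> fst S \<subseteq> edges G"
  by (auto simp: states_def)

lemma finite_states: assumes "wf_graph G" shows "finite (states G)"
proof -
  let ?F = "(\<lambda>(s, A). (s, \<lambda>Q. Q \<in> A)) ` (SIGMA s:Pow (edges G). Pow (comps G s))"
  have "states G \<subseteq> ?F"
  proof
    fix S assume S: "S \<in> states G"
    obtain s c where sc: "S = (s, c)" by (cases S)
    have "(s, {Q \<in> comps G s. c Q}) \<in> (SIGMA s:Pow (edges G). Pow (comps G s))"
      using S sc by (auto simp: states_def)
    moreover have "S = (\<lambda>(s, A). (s, \<lambda>Q. Q \<in> A)) (s, {Q \<in> comps G s. c Q})"
      using S sc by (auto simp: states_def fun_eq_iff)
    ultimately show "S \<in> ?F" by blast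
  qed
  moreover have "finite ?F"
    using assms finite_comps by (auto simp: wf_graph_def intro!: finite_SigmaI)
  ultimately show ?thesis by (rule finite_subset)
qed

lemma wf_ends_fin: "wf_graph G \<Longrightarrow> f \<in> edges G \<Longrightarrow> finite (ends G f)"
  unfolding wf_graph_def by (metis card.infinite not_one_le_zero)

lemma touch_verts: "touch G s e' x \<Longrightarrow> x \<in> verts G"
  unfolding touch_def by (auto dest: conn_verts)

lemma touch_conn: "touch G s e' y \<Longrightarrow> (x,y) \<in> conn_rel G s \<Longrightarrow> touch G s e' x"
  unfolding touch_def by (metis conn_trans)

lemma touch_end: "u \<in> ends G e' \<Longrightarrow> u \<in> verts G \<Longrightarrow> touch G s e' u"
  unfolding touch_def by (metis conn_refl)

lemma conn_insert:
  assumes wf: "wf_graph G" and e': "e' \<in> edges G" and s: "s \<subseteq> edges G"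
  shows "(x,y) \<in> conn_rel G (insert e' s) \<longleftrightarrow> (x,y) \<in> conn_rel G s \<or> (touch G s e' x \<and> touch G s e' y)"
proof
  assume "(x,y) \<in> conn_rel G (insert e' s)"
  then have x: "x \<in> verts G" and p: "(adj_in G (insert e' s))\<^sup>*\<^sup>* x y" by (auto simp: conn_rel_def)
  have "y \<in> verts G \<and> ((x,y) \<in> conn_rel G s \<or> (touch G s e' x \<and> touch G s e' y))"
    using p
  proof (induction rule: rtranclp_induct)
    case base then show ?case using x by (simp add: conn_refl)
  next
    case (step y z)
    from step(2) obtain f where f: "f \<in> insert e' s" "y \<in> ends G f" "z \<in> ends G f" by (auto simp: adj_in_def)
    have fE: "f \<in> edges G" using f(1) e' s by auto
    have z: "z \<in> verts G" using wf_ends[OF wf fE] f(3) by auto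
    have y: "y \<in> verts G" using step.IH by simp
    show ?case
    proof (cases "f = e'")
      case True
      have tz: "touch G s e' z" using True f(3) z by (simp add: touch_end)
      have ty: "touch G s e' y" using True f(2) y by (simp add: touch_end)
      have tx: "touch G s e' x"
        using step.IH touch_conn[OF ty] by blast
      show ?thesis using z tz tx by blast
    next
      case False
      then have fs: "f \<in> s" using f(1) by auto
      have yz: "(y,z) \<in> conn_rel G s" using conn_step[OF fs f(2,3) y z] .
      have "(x,z) \<in> conn_rel G s \<or> (touch G s e' x \<and> touch G s e' z)"
        using step.IH conn_trans[OF _ yz] touch_conn[OF _ conn_sym[OF yz]] by blast
      then show ?thesis using z by blast
    qed
  qed
  then show "(x,y) \<in> conn_rel G s \<or> (touch G s e' x \<and> touch G s e' y)" by blast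
next
  assume "(x,y) \<in> conn_rel G s \<or> (touch G s e' x \<and> touch G s e' y)"
  then show "(x,y) \<in> conn_rel G (insert e' s)"
  proof
    assume "(x,y) \<in> conn_rel G s" then show ?thesis by (rule conn_mono[rotated]) auto
  next
    assume "touch G s e' x \<and> touch G s e' y"
    then obtain u u' where uu: "u \<in> ends G e'" "u' \<in> ends G e'" "(x,u) \<in> conn_rel G s" "(y,u') \<in> conn_rel G s"
      unfolding touch_def by blast
    have uv: "u \<in> verts G" "u' \<in> verts G" using wf_ends[OF wf e'] uu(1,2) by auto
    have a: "(u,u') \<in> conn_rel G (insert e' s)"
      using conn_step[of e' "insert e' s" u G u', OF _ uu(1,2) uv] by simp
    have m: "\<And>a b. (a,b) \<in> conn_rel G s \<Longrightarrow> (a,b) \<in> conn_rel G (insert e' s)"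
      by (rule conn_mono[rotated]) auto
    show ?thesis using conn_trans[OF conn_trans[OF m[OF uu(3)] a] m[OF conn_sym[OF uu(4)]]] .
  qed
qed

lemma Tset_eq:
  assumes wf: "wf_graph G" and e': "e' \<in> edges G"
  shows "{Q \<in> comps G s. Q \<inter> ends G e' \<noteq> {}} = cls G s ` ends G e'"
proof (intro equalityI subsetI)
  fix Q assume "Q \<in> {Q \<in> comps G s. Q \<inter> ends G e' \<noteq> {}}"
  then obtain u where u: "Q \<in> comps G s" "u \<in> Q" "u \<in> ends G e'" by blast
  then have "Q = cls G s u" by (intro comp_cls)
  then show "Q \<in> cls G s ` ends G e'" using u(3) by (rule image_eqI)
next
  fix Q assume "Q \<in> cls G s ` ends G e'"
  then obtain u where u: "u \<in> ends G e'" "Q = cls G s u" by blast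
  then have uv: "u \<in> verts G" using wf_ends[OF wf e'] by blast
  have "Q \<in> comps G s" using u(2) cls_in_comps[OF uv] by simp
  moreover have "u \<in> Q" using u(2) cls_self[OF uv] by simp
  ultimately show "Q \<in> {Q \<in> comps G s. Q \<inter> ends G e' \<noteq> {}}"
    using u(1) by blast
qed

lemma card_ge2_iff: "finite A \<Longrightarrow> 2 \<le> card A \<longleftrightarrow> (\<exists>a\<in>A. \<exists>b\<in>A. a \<noteq> b)"
  using card_le_Suc0_iff_eq[of A] by (auto simp: not_le[symmetric])

lemma Tset_card:
  assumes wf: "wf_graph G" and e': "e' \<in> edges G"
  shows "2 \<le> card (cls G s ` ends G e') \<longleftrightarrow> (\<exists>p\<in>ends G e'. \<exists>q\<in>ends G e'. (p,q) \<notin> conn_rel G s)"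
proof -
  have fin: "finite (cls G s ` ends G e')" using wf_ends_fin[OF wf e'] by simp
  have V: "ends G e' \<subseteq> verts G" using wf_ends[OF wf e'] .
  show ?thesis unfolding card_ge2_iff[OF fin]
  proof
    assume "\<exists>a\<in>cls G s ` ends G e'. \<exists>b\<in>cls G s ` ends G e'. a \<noteq> b"
    then obtain p q where pq: "p \<in> ends G e'" "q \<in> ends G e'" "cls G s p \<noteq> cls G s q" by blast
    then have "(p,q) \<notin> conn_rel G s" using cls_eq_iff[of p G q s] V by blast
    then show "\<exists>p\<in>ends G e'. \<exists>q\<in>ends G e'. (p,q) \<notin> conn_rel G s" using pq by blast
  next
    assume "\<exists>p\<in>ends G e'. \<exists>q\<in>ends G e'. (p,q) \<notin> conn_rel G s"
    then obtain p q where pq: "p \<in> ends G e'" "q \<in> ends G e'" "(p,q) \<notin> conn_rel G s" by blast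
    then have "cls G s p \<noteq> cls G s q" using cls_eq_iff[of p G q s] V by blast
    then show "\<exists>a\<in>cls G s ` ends G e'. \<exists>b\<in>cls G s ` ends G e'. a \<noteq> b" using pq by blast
  qed
qed

lemma union_Tset: "\<Union>(cls G s ` ends G e') = {y. touch G s e' y}"
  unfolding touch_def by (auto simp: mem_cls) (metis conn_sym)+

lemma cls_insert:
  assumes wf: "wf_graph G" and e': "e' \<in> edges G" and s: "s \<subseteq> edges G" and x: "x \<in> verts G"
  shows "cls G (insert e' s) x = (if touch G s e' x then {y. touch G s e' y} else cls G s x)"
proof (rule Set.set_eqI)
  fix y
  have "y \<in> cls G (insert e' s) x \<longleftrightarrow> (x,y) \<in> conn_rel G s \<or> (touch G s e' x \<and> touch G s e' y)"
    using conn_insert[OF wf e' s, of x y] by (simp add: mem_cls)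
  moreover have "touch G s e' x \<Longrightarrow> (x,y) \<in> conn_rel G s \<Longrightarrow> touch G s e' y"
    using touch_conn conn_sym by metis
  ultimately show "y \<in> cls G (insert e' s) x \<longleftrightarrow> y \<in> (if touch G s e' x then {y. touch G s e' y} else cls G s x)"
    by (auto simp: mem_cls)
qed

lemma add_edge_eq:
  assumes wf: "wf_graph G" and e': "e' \<in> edges G"
  shows "add_edge G S e' =
    (if (\<exists>p\<in>ends G e'. \<exists>q\<in>ends G e'. (p,q) \<notin> conn_rel G (fst S)) \<and> (\<forall>u\<in>ends G e'. vcol G S u)
     then None
     else Some (insert e' (fst S), \<lambda>Q. if Q = {y. touch G (fst S) e' y} then (\<exists>u\<in>ends G e'. vcol G S u)
                                       else if Q \<in> cls G (fst S) ` ends G e' then False else snd S Q))"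
  unfolding add_edge_def Let_def Tset_eq[OF wf e'] Tset_card[OF wf e'] union_Tset
  by (simp add: vcol_def)

lemma add_edge_None:
  assumes wf: "wf_graph G" and e': "e' \<in> edges G"
  shows "add_edge G S e' = None \<longleftrightarrow>
    (\<exists>p\<in>ends G e'. \<exists>q\<in>ends G e'. (p,q) \<notin> conn_rel G (fst S)) \<and> (\<forall>u\<in>ends G e'. vcol G S u)"
  unfolding add_edge_eq[OF wf e'] by simp

lemma add_edge_Some:
  assumes wf: "wf_graph G" and e': "e' \<in> edges G" and S: "S \<in> states G"
    and T: "add_edge G S e' = Some T"
  shows "T \<in> states G \<and> fst T = insert e' (fst S) \<and>
    (\<forall>x\<in>verts G. vcol G T x = (if touch G (fst S) e' x then (\<exists>u\<in>ends G e'. vcol G S u) else vcol G S x))"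
proof -
  let ?s = "fst S"
  let ?M = "{y. touch G ?s e' y}"
  define c2 where "c2 = (\<lambda>Q. if Q = ?M then (\<exists>u\<in>ends G e'. vcol G S u)
                                       else if Q \<in> cls G ?s ` ends G e' then False else snd S Q)"
  have Teq: "T = (insert e' ?s, c2)"
    using T unfolding add_edge_eq[OF wf e'] c2_def by (auto split: if_splits)
  have s: "?s \<subseteq> edges G" using S states_fst by blast
  have V: "ends G e' \<subseteq> verts G" using wf_ends[OF wf e'] .
  have notM: "cls G ?s x \<noteq> ?M" "cls G ?s x \<notin> cls G ?s ` ends G e'"
    if x: "x \<in> verts G" "\<not> touch G ?s e' x" for x
  proof -
    show "cls G ?s x \<noteq> ?M" using x cls_self[OF x(1)] by auto
    show "cls G ?s x \<notin> cls G ?s ` ends G e'"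
    proof
      assume "cls G ?s x \<in> cls G ?s ` ends G e'"
      then obtain u where u: "u \<in> ends G e'" "cls G ?s x = cls G ?s u" by blast
      then have "(x,u) \<in> conn_rel G ?s" using cls_eq_iff[of x G u ?s] x V by blast
      then show False using x u unfolding touch_def by blast
    qed
  qed
  have vc: "vcol G T x = (if touch G ?s e' x then (\<exists>u\<in>ends G e'. vcol G S u) else vcol G S x)"
    if x: "x \<in> verts G" for x
  proof (cases "touch G ?s e' x")
    case True
    then show ?thesis using Teq cls_insert[OF wf e' s x] by (simp add: vcol_def c2_def)
  next
    case False
    then show ?thesis using Teq cls_insert[OF wf e' s x] notM[OF x False] by (simp add: vcol_def c2_def)
  qed
  have st: "T \<in> states G"
  proof -
    have "Q \<in> comps G (insert e' ?s)" if cQ: "c2 Q" for Q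
    proof (cases "Q = ?M")
      case True
      obtain u where u: "u \<in> ends G e'" using wf_ends_ne[OF wf e'] by blast
      then have uV: "u \<in> verts G" using V by blast
      have "touch G ?s e' u" using touch_end[OF u uV] .
      then have "cls G (insert e' ?s) u = ?M" using cls_insert[OF wf e' s uV] by simp
      then show ?thesis using True cls_in_comps[OF uV, of "insert e' ?s"] by simp
    next
      case False
      then have nT: "Q \<notin> cls G ?s ` ends G e'" and cS: "snd S Q" using cQ unfolding c2_def by (auto split: if_splits)
      then have "Q \<in> comps G ?s" using state_out[OF S] by blast
      then obtain z where z: "z \<in> verts G" "Q = cls G ?s z" unfolding comps_iff by blast
      have "\<not> touch G ?s e' z"
      proof
        assume "touch G ?s e' z"
        then obtain u where u: "u \<in> ends G e'" "(z,u) \<in> conn_rel G ?s" unfolding touch_def by blast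
        then have "cls G ?s z = cls G ?s u" using cls_eq_iff[of z G u ?s] z V by blast
        then show False using nT z u by blast
      qed
      then have "cls G (insert e' ?s) z = Q" using cls_insert[OF wf e' s z(1)] z by simp
      then show ?thesis using cls_in_comps[OF z(1), of "insert e' ?s"] by simp
    qed
    then show ?thesis using Teq s e' unfolding states_def by auto
  qed
  show ?thesis using st vc Teq by simp
qed

lemma add_edge_Some_iff:
  assumes wf: "wf_graph G" and e': "e' \<in> edges G" and S: "S \<in> states G" and T: "T \<in> states G"
  shows "add_edge G S e' = Some T \<longleftrightarrow> fst T = insert e' (fst S) \<and>
    \<not> ((\<exists>p\<in>ends G e'. \<exists>q\<in>ends G e'. (p,q) \<notin> conn_rel G (fst S)) \<and> (\<forall>u\<in>ends G e'. vcol G S u)) \<and>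
    (\<forall>x\<in>verts G. vcol G T x = (if touch G (fst S) e' x then (\<exists>u\<in>ends G e'. vcol G S u) else vcol G S x))"
  (is "?L \<longleftrightarrow> ?R")
proof
  assume ?L then show ?R using add_edge_Some[OF wf e' S] add_edge_None[OF wf e', of S] by auto
next
  assume R: ?R
  then obtain T0 where T0: "add_edge G S e' = Some T0" using add_edge_None[OF wf e', of S] by (cases "add_edge G S e'") auto
  have "T0 = T"
    using add_edge_Some[OF wf e' S T0] R by (intro state_eqI[OF _ T]) auto
  then show ?L using T0 by simp
qed

lemma diff_off_states:
  assumes wf: "wf_graph G" and T: "T \<notin> states G"
  shows "diff G r \<phi> T = 0"
  unfolding diff_def
proof (intro sum.neutral ballI)
  fix S e' assume S: "S \<in> states G" and e': "e' \<in> edges G - fst S"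
  show "(case add_edge G S e' of None \<Rightarrow> 0 | Some T' \<Rightarrow> if T' = T then (- 1) ^ nbefore r (fst S) e' * \<phi> S else 0) = 0"
    using add_edge_Some[OF wf _ S, of e'] e' T by (cases "add_edge G S e'") auto
qed

lemma dterm_add: "(case oo of None \<Rightarrow> 0 | Some T' \<Rightarrow> if T' = T then c * (a + b) else (0::int)) =
  (case oo of None \<Rightarrow> 0 | Some T' \<Rightarrow> if T' = T then c * a else 0) + (case oo of None \<Rightarrow> 0 | Some T' \<Rightarrow> if T' = T then c * b else 0)"
  by (cases oo) (auto simp: algebra_simps)
lemma dterm_neg: "(case oo of None \<Rightarrow> 0 | Some T' \<Rightarrow> if T' = T then c * (- a) else (0::int)) =
  - (case oo of None \<Rightarrow> 0 | Some T' \<Rightarrow> if T' = T then c * a else 0)"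
  by (cases oo) (auto simp: algebra_simps)
lemma dterm_zero: "(case oo of None \<Rightarrow> 0 | Some T' \<Rightarrow> if T' = T then c * 0 else (0::int)) = 0"
  by (cases oo) auto

lemma diff_add: "diff G r (\<lambda>S. x S + y S) = (\<lambda>T. diff G r x T + diff G r y T)"
  unfolding diff_def by (simp add: dterm_add sum.distrib)
lemma diff_neg: "diff G r (\<lambda>S. - x S) = (\<lambda>T. - diff G r x T)"
  unfolding diff_def by (simp add: dterm_neg sum_negf)
lemma diff_zero: "diff G r (\<lambda>_. 0) = (\<lambda>_. 0)"
  unfolding diff_def by (auto intro!: sum.neutral split: option.splits)
lemma diff_cong: "(\<And>S. S \<in> states G \<Longrightarrow> x S = y S) \<Longrightarrow> diff G r x = diff G r y"
  unfolding diff_def by (intro ext sum.cong refl) (auto split: option.splits)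

lemma chains_add: assumes "x \<in> chains G i j" "y \<in> chains G i j"
  shows "(\<lambda>S. x S + y S) \<in> chains G i j"
  unfolding chains_def
proof (intro CollectI allI impI)
  fix S assume "x S + y S \<noteq> 0"
  then have "x S \<noteq> 0 \<or> y S \<noteq> 0" by auto
  then show "S \<in> states G \<and> ideg S = i \<and> jdeg G S = j" using assms unfolding chains_def by blast
qed

lemma addsub_chains: "addsub (chains G i j)"
  unfolding addsub_def
proof (intro conjI ballI chains_add)
  show "(\<lambda>_. 0) \<in> chains G i j" by (simp add: chains_def)
  fix x assume "x \<in> chains G i j"
  then show "(\<lambda>S. - x S) \<in> chains G i j" by (simp add: chains_def)
qed

lemma addsub_cycles: "addsub (cycles G r i j)"
  unfolding addsub_def cycles_def
proof (intro conjI ballI)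
  show "(\<lambda>_. 0) \<in> {\<phi> \<in> chains G i j. diff G r \<phi> = (\<lambda>_. 0)}"
    by (intro CollectI conjI addsub_zero[OF addsub_chains] diff_zero)
next
  fix x y assume "x \<in> {\<phi> \<in> chains G i j. diff G r \<phi> = (\<lambda>_. 0)}" "y \<in> {\<phi> \<in> chains G i j. diff G r \<phi> = (\<lambda>_. 0)}"
  then show "(\<lambda>S. x S + y S) \<in> {\<phi> \<in> chains G i j. diff G r \<phi> = (\<lambda>_. 0)}"
    using addsub_add[OF addsub_chains, of x G i j y] diff_add[of G r x y] by simp
next
  fix x assume "x \<in> {\<phi> \<in> chains G i j. diff G r \<phi> = (\<lambda>_. 0)}"
  then show "(\<lambda>S. - x S) \<in> {\<phi> \<in> chains G i j. diff G r \<phi> = (\<lambda>_. 0)}"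
    using addsub_neg[OF addsub_chains, of x G i j] diff_neg[of G r x] by simp
qed

lemma addsub_boundaries: "addsub (boundaries G r i j)"
  unfolding addsub_def boundaries_def
proof (intro conjI ballI)
  show "(\<lambda>_. 0) \<in> diff G r ` chains G (i - 1) j"
    using diff_zero[of G r] addsub_zero[OF addsub_chains] by (rule image_eqI[OF sym])
next
  fix x y assume "x \<in> diff G r ` chains G (i - 1) j" "y \<in> diff G r ` chains G (i - 1) j"
  then obtain a b where ab: "a \<in> chains G (i - 1) j" "b \<in> chains G (i - 1) j" "x = diff G r a" "y = diff G r b" by blast
  then show "(\<lambda>S. x S + y S) \<in> diff G r ` chains G (i - 1) j"
  proof -
    have "(\<lambda>S. a S + b S) \<in> chains G (i - 1) j" using addsub_add[OF addsub_chains] ab(1,2) .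
    moreover have "(\<lambda>S. x S + y S) = diff G r (\<lambda>S. a S + b S)" using diff_add[of G r a b] ab(3,4) by simp
    ultimately show ?thesis unfolding image_iff by blast
  qed
next
  fix x assume "x \<in> diff G r ` chains G (i - 1) j"
  then obtain a where a: "a \<in> chains G (i - 1) j" "x = diff G r a" by blast
  then show "(\<lambda>S. - x S) \<in> diff G r ` chains G (i - 1) j"
  proof -
    have "(\<lambda>S. - a S) \<in> chains G (i - 1) j" using addsub_neg[OF addsub_chains] a(1) .
    moreover have "(\<lambda>S. - x S) = diff G r (\<lambda>S. - a S)" using diff_neg[of G r a] a(2) by simp
    ultimately show ?thesis unfolding image_iff by blast
  qed
qed

lemma cohom_pmon: "cohom G r i j = pmon (cycles G r i j) Mod boundaries G r i j"
  by (simp add: cohom_def cycle_group_def pmon_def)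

lemma in_cycles: "x \<in> cycles G r i j \<longleftrightarrow> x \<in> chains G i j \<and> diff G r x = (\<lambda>_. 0)"
  by (simp add: cycles_def)
lemma in_boundaries: "x \<in> boundaries G r i j \<longleftrightarrow> (\<exists>y \<in> chains G (i - 1) j. x = diff G r y)"
  by (auto simp: boundaries_def)

definition setAt :: "('v,'e) graph \<Rightarrow> 'v \<Rightarrow> bool \<Rightarrow> ('v,'e) estate \<Rightarrow> ('v,'e) estate" where
  "setAt H x0 b S = (fst S, (snd S)(cls H (fst S) x0 := b))"

lemma fst_setAt[simp]: "fst (setAt H x0 b S) = fst S"
  by (simp add: setAt_def)

lemma setAt_state: "S \<in> states H \<Longrightarrow> x0 \<in> verts H \<Longrightarrow> setAt H x0 b S \<in> states H"
  using cls_in_comps[of x0 H "fst S"] unfolding states_def setAt_def by auto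

lemma vcol_setAt: "x \<in> verts H \<Longrightarrow> x0 \<in> verts H \<Longrightarrow>
   vcol H (setAt H x0 b S) x = (if (x,x0) \<in> conn_rel H (fst S) then b else vcol H S x)"
  unfolding vcol_def setAt_def using cls_eq_iff[of x H x0 "fst S"] by auto

lemma colAt_setAt: "x0 \<in> verts H \<Longrightarrow> vcol H (setAt H x0 b S) x0 = b"
  using vcol_setAt[of x0 H x0 b S] conn_refl[of x0 H] by simp

lemma setAt_setAt: "setAt H x0 b (setAt H x0 b' S) = setAt H x0 b S"
  by (simp add: setAt_def)

lemma setAt_self: "vcol H S x0 = b \<Longrightarrow> setAt H x0 b S = S"
  unfolding setAt_def vcol_def by (auto simp: prod_eq_iff)

lemma jdeg_setAt:
  assumes S: "S \<in> states H" and x0: "x0 \<in> verts H" and c: "vcol H S x0" and fin: "finite (verts H)"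
  shows "jdeg H S = jdeg H (setAt H x0 False S) + 1"
proof -
  let ?Q = "cls H (fst S) x0"
  have "{Q \<in> comps H (fst S). snd S Q} = insert ?Q {Q \<in> comps H (fst S). ((snd S)(?Q := False)) Q}"
    using c cls_in_comps[OF x0] unfolding vcol_def by auto
  moreover have "?Q \<notin> {Q \<in> comps H (fst S). ((snd S)(?Q := False)) Q}" by simp
  moreover have "finite {Q \<in> comps H (fst S). ((snd S)(?Q := False)) Q}"
    using finite_comps[OF fin] by simp
  ultimately show ?thesis unfolding jdeg_def setAt_def by simp
qed

lemma ends_le2:
  assumes wf: "wf_graph G" and e': "e' \<in> edges G" and abc: "a \<in> ends G e'" "b \<in> ends G e'" "c \<in> ends G e'"
  shows "a = b \<or> a = c \<or> b = c"
proof (rule ccontr)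
  assume "\<not> (a = b \<or> a = c \<or> b = c)"
  then have "card {a,b,c} = 3" by auto
  moreover have "card {a,b,c} \<le> card (ends G e')"
    using abc wf_ends_fin[OF wf e'] by (intro card_mono) auto
  moreover have "card (ends G e') \<le> 2" using wf e' by (auto simp: wf_graph_def)
  ultimately show False by simp
qed

lemma Ma:
  assumes wf: "wf_graph H" and x0: "x0 \<in> verts H" and S: "S \<in> states H"
    and e': "e' \<in> edges H" and c: "vcol H S x0" and T: "add_edge H S e' = Some T"
  shows "vcol H T x0 \<and> add_edge H (setAt H x0 False S) e' = Some (setAt H x0 False T)"
proof -
  let ?s = "fst S"
  let ?E = "ends H e'"
  let ?K = "\<lambda>x. (x,x0) \<in> conn_rel H ?s"
  let ?t = "touch H ?s e'"
  let ?V = "vcol H S"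
  note TS = add_edge_Some[OF wf e' S T]
  have Tst: "T \<in> states H" and fT: "fst T = insert e' ?s" using TS by auto
  have vT: "\<And>x. x \<in> verts H \<Longrightarrow> vcol H T x = (if ?t x then (\<exists>u\<in>?E. ?V u) else ?V x)" using TS by auto
  have nN: "\<not> ((\<exists>p\<in>?E. \<exists>q\<in>?E. (p,q) \<notin> conn_rel H ?s) \<and> (\<forall>u\<in>?E. ?V u))"
    using add_edge_None[OF wf e', of S] T by auto
  have s: "?s \<subseteq> edges H" using states_fst[OF S] .
  have EV: "?E \<subseteq> verts H" using wf_ends[OF wf e'] .
  have cT: "vcol H T x0"
  proof (cases "?t x0")
    case True
    then obtain u where u: "u \<in> ?E" "(x0,u) \<in> conn_rel H ?s" unfolding touch_def by blast
    then have "?V u" using c vcol_conn[of x0 u H S] by simp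
    then show ?thesis using vT[OF x0] True u by auto
  next
    case False then show ?thesis using vT[OF x0] c by auto
  qed
  have V': "\<And>x. x \<in> verts H \<Longrightarrow> vcol H (setAt H x0 False S) x = (\<not> ?K x \<and> ?V x)"
    using vcol_setAt[OF _ x0] by simp
  have VT': "\<And>x. x \<in> verts H \<Longrightarrow> vcol H (setAt H x0 False T) x = (\<not> (x,x0) \<in> conn_rel H (insert e' ?s) \<and> vcol H T x)"
    using vcol_setAt[OF _ x0] fT by simp
  have Kins: "\<And>x. (x,x0) \<in> conn_rel H (insert e' ?s) \<longleftrightarrow> ?K x \<or> (?t x \<and> ?t x0)"
    using conn_insert[OF wf e' s] by blast
  have goal: "add_edge H (setAt H x0 False S) e' = Some (setAt H x0 False T)"
    unfolding add_edge_Some_iff[OF wf e' setAt_state[OF S x0] setAt_state[OF Tst x0]] fst_setAt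
  proof (intro conjI ballI)
    show "fst T = insert e' ?s" using fT .
    show "\<not> ((\<exists>p\<in>?E. \<exists>q\<in>?E. (p,q) \<notin> conn_rel H ?s) \<and> (\<forall>u\<in>?E. vcol H (setAt H x0 False S) u))"
      using nN V' EV by blast
  next
    fix x assume x: "x \<in> verts H"
    show "vcol H (setAt H x0 False T) x =
      (if ?t x then \<exists>u\<in>?E. vcol H (setAt H x0 False S) u else vcol H (setAt H x0 False S) x)"
    proof (cases "?t x")
      case tx: True
      show ?thesis
      proof (cases "?t x0")
        case tx0: True
        have "\<not> (\<exists>u\<in>?E. \<not> ?K u \<and> ?V u)"
        proof
          assume "\<exists>u\<in>?E. \<not> ?K u \<and> ?V u"
          then obtain u where u: "u \<in> ?E" "\<not> ?K u" "?V u" by blast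
          obtain u0 where u0: "u0 \<in> ?E" "(x0,u0) \<in> conn_rel H ?s" using tx0 unfolding touch_def by blast
          have Vu0: "?V u0" using c vcol_conn[OF u0(2)] by simp
          have nc: "(u0,u) \<notin> conn_rel H ?s"
          proof
            assume "(u0,u) \<in> conn_rel H ?s"
            then have "?K u" using conn_sym conn_trans u0(2) by metis
            then show False using u(2) by simp
          qed
          then obtain w where w: "w \<in> ?E" "\<not> ?V w" using nN u u0 by blast
          have "u0 = u \<or> u0 = w \<or> u = w" using ends_le2[OF wf e' u0(1) u(1) w(1)] .
          moreover have "u0 \<noteq> u" using nc conn_refl[of u H ?s] u(1) EV by blast
          ultimately show False using w Vu0 u(3) by blast
        qed
        then show ?thesis using tx tx0 VT'[OF x] Kins[of x] V' EV by auto
      next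
        case ntx0: False
        have nKx: "\<not> ?K x"
        proof
          assume Kx: "?K x"
          obtain u where u: "u \<in> ?E" "(x,u) \<in> conn_rel H ?s" using tx unfolding touch_def by blast
          have "(x0,u) \<in> conn_rel H ?s" using conn_trans[OF conn_sym[OF Kx] u(2)] .
          then show False using ntx0 u(1) unfolding touch_def by blast
        qed
        have nKu: "\<not> ?K u" if u: "u \<in> ?E" for u
        proof
          assume "?K u"
          then have "(x0,u) \<in> conn_rel H ?s" by (rule conn_sym)
          then show False using ntx0 u unfolding touch_def by blast
        qed
        show ?thesis using tx ntx0 VT'[OF x] Kins[of x] nKx vT[OF x] V' EV nKu by auto
      qed
    next
      case ntx: False
      then show ?thesis using VT'[OF x] Kins[of x] vT[OF x] V'[OF x] by auto
    qed
  qed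
  show ?thesis using cT goal by simp
qed

lemma Mb:
  assumes wf: "wf_graph H" and x0: "x0 \<in> verts H" and S: "S \<in> states H"
    and e': "e' \<in> edges H" and c: "vcol H S x0"
    and Y: "add_edge H (setAt H x0 False S) e' = Some Y" and nY: "\<not> vcol H Y x0"
  shows "add_edge H S e' = Some (setAt H x0 True Y)"
proof -
  let ?s = "fst S"
  let ?E = "ends H e'"
  let ?K = "\<lambda>x. (x,x0) \<in> conn_rel H ?s"
  let ?t = "touch H ?s e'"
  let ?V = "vcol H S"
  let ?S' = "setAt H x0 False S"
  have S': "?S' \<in> states H" using setAt_state[OF S x0] .
  note YS = add_edge_Some[OF wf e' S' Y]
  have Yst: "Y \<in> states H" and fY: "fst Y = insert e' ?s" using YS by auto
  have V': "\<And>x. x \<in> verts H \<Longrightarrow> vcol H ?S' x = (\<not> ?K x \<and> ?V x)"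
    using vcol_setAt[OF _ x0] by simp
  have vY: "\<And>x. x \<in> verts H \<Longrightarrow> vcol H Y x = (if ?t x then (\<exists>u\<in>?E. vcol H ?S' u) else vcol H ?S' x)"
    using YS by auto
  have nN: "\<not> ((\<exists>p\<in>?E. \<exists>q\<in>?E. (p,q) \<notin> conn_rel H ?s) \<and> (\<forall>u\<in>?E. vcol H ?S' u))"
    using add_edge_None[OF wf e', of ?S'] Y by auto
  have s: "?s \<subseteq> edges H" using states_fst[OF S] .
  have EV: "?E \<subseteq> verts H" using wf_ends[OF wf e'] .
  have Kx0: "?K x0" using conn_refl[OF x0] .
  have hyp: "?t x0 \<Longrightarrow> \<forall>u\<in>?E. ?K u \<or> \<not> ?V u"
    using nY vY[OF x0] V' EV by auto
  have VY': "\<And>x. x \<in> verts H \<Longrightarrow> vcol H (setAt H x0 True Y) x = ((x,x0) \<in> conn_rel H (insert e' ?s) \<or> vcol H Y x)"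
    using vcol_setAt[OF _ x0] fY by simp
  have Kins: "\<And>x. (x,x0) \<in> conn_rel H (insert e' ?s) \<longleftrightarrow> ?K x \<or> (?t x \<and> ?t x0)"
    using conn_insert[OF wf e' s] by blast
  have nKu: "\<not> ?K u" if ntx0: "\<not> ?t x0" and u: "u \<in> ?E" for u
  proof
    assume "?K u"
    then have "(x0,u) \<in> conn_rel H ?s" by (rule conn_sym)
    then show False using ntx0 u unfolding touch_def by blast
  qed
  have VK: "\<And>x. ?K x \<Longrightarrow> ?V x" using c vcol_conn by metis
  show ?thesis
    unfolding add_edge_Some_iff[OF wf e' S setAt_state[OF Yst x0]] fst_setAt
  proof (intro conjI ballI)
    show "fst Y = insert e' ?s" using fY .
    show "\<not> ((\<exists>p\<in>?E. \<exists>q\<in>?E. (p,q) \<notin> conn_rel H ?s) \<and> (\<forall>u\<in>?E. ?V u))"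
    proof
      assume A: "(\<exists>p\<in>?E. \<exists>q\<in>?E. (p,q) \<notin> conn_rel H ?s) \<and> (\<forall>u\<in>?E. ?V u)"
      then obtain p q where pq: "p \<in> ?E" "q \<in> ?E" "(p,q) \<notin> conn_rel H ?s" by blast
      show False
      proof (cases "?t x0")
        case True
        then have "?K p" "?K q" using hyp A pq by blast+
        then have "(p,q) \<in> conn_rel H ?s" using conn_sym conn_trans by metis
        then show False using pq by simp
      next
        case False
        then have "\<forall>u\<in>?E. vcol H ?S' u" using A nKu V' EV by blast
        then show False using nN A by blast
      qed
    qed
  next
    fix x assume x: "x \<in> verts H"
    show "vcol H (setAt H x0 True Y) x = (if ?t x then \<exists>u\<in>?E. ?V u else ?V x)"
    proof (cases "?t x")
      case tx: True
      show ?thesis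
      proof (cases "?t x0")
        case tx0: True
        obtain u0 where u0: "u0 \<in> ?E" "(x0,u0) \<in> conn_rel H ?s" using tx0 unfolding touch_def by blast
        have "?V u0" using c vcol_conn[OF u0(2)] by simp
        then show ?thesis using tx tx0 VY'[OF x] Kins[of x] u0(1) by auto
      next
        case ntx0: False
        have nKx: "\<not> ?K x"
        proof
          assume Kx: "?K x"
          obtain u where u: "u \<in> ?E" "(x,u) \<in> conn_rel H ?s" using tx unfolding touch_def by blast
          have "(x0,u) \<in> conn_rel H ?s" using conn_trans[OF conn_sym[OF Kx] u(2)] .
          then show False using ntx0 u(1) unfolding touch_def by blast
        qed
        show ?thesis using tx ntx0 VY'[OF x] Kins[of x] nKx vY[OF x] V' EV nKu by auto
      qed
    next
      case ntx: False
      then show ?thesis using VY'[OF x] Kins[of x] vY[OF x] V'[OF x] VK[of x] by auto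
    qed
  qed
qed

definition inv_pairs :: "('e \<Rightarrow> nat) \<Rightarrow> ('e \<Rightarrow> nat) \<Rightarrow> 'e set \<Rightarrow> ('e \<times> 'e) set" where
  "inv_pairs r r2 s = {(f,g). f \<in> s \<and> g \<in> s \<and> r f < r g \<and> r2 g < r2 f}"
definition eps :: "('e \<Rightarrow> nat) \<Rightarrow> ('e \<Rightarrow> nat) \<Rightarrow> 'e set \<Rightarrow> int" where
  "eps r r2 s = (-1) ^ card (inv_pairs r r2 s)"

lemma eps_sym: "eps r r2 s = eps r2 r s"
proof -
  have "inv_pairs r2 r s = (\<lambda>(f,g). (g,f)) ` inv_pairs r r2 s"
    by (auto simp: inv_pairs_def image_iff)
  then have "card (inv_pairs r2 r s) = card (inv_pairs r r2 s)"
    using card_image[OF swap_inj_on] by simp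
  then show ?thesis by (simp add: eps_def)
qed

lemma eps_sq: "eps r r2 s * eps r r2 s = 1"
  by (simp add: eps_def power_mult_distrib[symmetric])

lemma eps_step:
  assumes fin: "finite s" and e': "e' \<notin> s" and i1: "inj_on r (insert e' s)" and i2: "inj_on r2 (insert e' s)"
  shows "eps r r2 (insert e' s) * (-1) ^ nbefore r s e' = eps r r2 s * (-1) ^ nbefore r2 s e'"
proof -
  define A where "A = {f\<in>s. r f < r e' \<and> r2 e' < r2 f}"
  define B where "B = {g\<in>s. r e' < r g \<and> r2 g < r2 e'}"
  define C where "C = {f\<in>s. r f < r e' \<and> r2 f < r2 e'}"
  have finA: "finite A" "finite B" "finite C" using fin by (auto simp: A_def B_def C_def)
  have ne: "\<And>f. f \<in> s \<Longrightarrow> r f \<noteq> r e' \<and> r2 f \<noteq> r2 e'"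
    using i1 i2 e' by (metis inj_on_contraD insertCI)
  have IP: "inv_pairs r r2 (insert e' s) = inv_pairs r r2 s \<union> ((\<lambda>f. (f,e')) ` A \<union> (\<lambda>g. (e',g)) ` B)"
    unfolding inv_pairs_def A_def B_def by auto
  have fIP: "finite (inv_pairs r r2 s)"
    by (rule finite_subset[of _ "s \<times> s"]) (auto simp: inv_pairs_def fin)
  have d1: "inv_pairs r r2 s \<inter> ((\<lambda>f. (f,e')) ` A \<union> (\<lambda>g. (e',g)) ` B) = {}"
    using e' unfolding inv_pairs_def by auto
  have d2: "(\<lambda>f. (f,e')) ` A \<inter> (\<lambda>g. (e',g)) ` B = {}"
    using e' unfolding A_def B_def by auto
  have cA: "card ((\<lambda>f. (f,e')) ` A) = card A" by (rule card_image) (auto simp: inj_on_def)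
  have cB: "card ((\<lambda>g. (e',g)) ` B) = card B" by (rule card_image) (auto simp: inj_on_def)
  have c1: "card (inv_pairs r r2 (insert e' s)) = card (inv_pairs r r2 s) + card A + card B"
    unfolding IP using card_Un_disjoint[OF fIP _ d1] card_Un_disjoint[OF _ _ d2] finA cA cB by simp
  have n1: "nbefore r s e' = card C + card A"
  proof -
    have "{f\<in>s. r f < r e'} = C \<union> A" unfolding A_def C_def by (auto dest: ne simp: linorder_neq_iff)
    moreover have "C \<inter> A = {}" unfolding A_def C_def by auto
    ultimately show ?thesis unfolding nbefore_def using card_Un_disjoint finA by simp
  qed
  have n2: "nbefore r2 s e' = card C + card B"
  proof -
    have "{f\<in>s. r2 f < r2 e'} = C \<union> B" unfolding B_def C_def by (auto dest: ne simp: linorder_neq_iff)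
    moreover have "C \<inter> B = {}" unfolding B_def C_def by auto
    ultimately show ?thesis unfolding nbefore_def using card_Un_disjoint finA by simp
  qed
  have sq: "((-1::int) ^ card A) * (-1) ^ card A = 1"
    by (simp add: power_mult_distrib[symmetric])
  show ?thesis unfolding eps_def c1 n1 n2
    by (simp add: power_add algebra_simps sq)
qed

lemma diff_twist:
  assumes wf: "wf_graph G" and i1: "inj_on r (edges G)" and i2: "inj_on r2 (edges G)"
  shows "diff G r2 (\<lambda>S. eps r r2 (fst S) * \<phi> S) = (\<lambda>T. eps r r2 (fst T) * diff G r \<phi> T)"
proof (rule ext)
  fix T
  have "diff G r2 (\<lambda>S. eps r r2 (fst S) * \<phi> S) T =
    (\<Sum>S\<in>states G. \<Sum>e'\<in>edges G - fst S. eps r r2 (fst T) *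
       (case add_edge G S e' of None \<Rightarrow> 0 | Some T' \<Rightarrow> if T' = T then (- 1) ^ nbefore r (fst S) e' * \<phi> S else 0))"
    unfolding diff_def
  proof (intro sum.cong refl)
    fix S e' assume S: "S \<in> states G" and e': "e' \<in> edges G - fst S"
    show "(case add_edge G S e' of None \<Rightarrow> 0 | Some T' \<Rightarrow> if T' = T then (- 1) ^ nbefore r2 (fst S) e' * (eps r r2 (fst S) * \<phi> S) else 0) =
      eps r r2 (fst T) * (case add_edge G S e' of None \<Rightarrow> 0 | Some T' \<Rightarrow> if T' = T then (- 1) ^ nbefore r (fst S) e' * \<phi> S else 0)"
    proof (cases "add_edge G S e'")
      case None then show ?thesis by simp
    next
      case (Some X)
      have fX: "fst X = insert e' (fst S)" using add_edge_Some[OF wf _ S Some] e' by simp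
      have sE: "fst S \<subseteq> edges G" using states_fst[OF S] .
      have fin: "finite (fst S)" using sE wf_fin[OF wf] finite_subset by blast
      have st: "eps r r2 (insert e' (fst S)) * (-1) ^ nbefore r (fst S) e' = eps r r2 (fst S) * (-1) ^ nbefore r2 (fst S) e'"
        using eps_step[OF fin _ inj_on_subset[OF i1] inj_on_subset[OF i2]] e' sE by auto
      show ?thesis using Some fX st by (auto simp: algebra_simps)
    qed
  qed
  also have "\<dots> = eps r r2 (fst T) * diff G r \<phi> T"
    unfolding diff_def by (simp add: sum_distrib_left)
  finally show "diff G r2 (\<lambda>S. eps r r2 (fst S) * \<phi> S) T = eps r r2 (fst T) * diff G r \<phi> T" .
qed

lemma twist_iso:
  assumes wf: "wf_graph G" and i1: "inj_on r (edges G)" and i2: "inj_on r2 (edges G)"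
  shows "cohom G r i j \<cong> cohom G r2 i j"
proof -
  define \<Phi> where "\<Phi> \<phi> = (\<lambda>S. eps r r2 (fst S) * \<phi> S)" for \<phi> :: "('a,'b) chain"
  have sq: "\<Phi> (\<Phi> \<phi>) = \<phi>" for \<phi>
    unfolding \<Phi>_def by (simp add: mult.assoc[symmetric] eps_sq)
  have d1: "diff G r2 (\<Phi> \<phi>) = \<Phi> (diff G r \<phi>)" for \<phi>
    unfolding \<Phi>_def using diff_twist[OF wf i1 i2] .
  have d2: "diff G r (\<Phi> \<phi>) = \<Phi> (diff G r2 \<phi>)" for \<phi>
    unfolding \<Phi>_def using diff_twist[OF wf i2 i1] eps_sym[of r2 r] by simp
  have ch: "\<phi> \<in> chains G a b \<Longrightarrow> \<Phi> \<phi> \<in> chains G a b" for \<phi> a b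
    unfolding \<Phi>_def chains_def by auto
  have z0: "\<Phi> (\<lambda>_. 0) = (\<lambda>_. 0)" by (simp add: \<Phi>_def)
  have z: "\<Phi> \<phi> = (\<lambda>_. 0) \<longleftrightarrow> \<phi> = (\<lambda>_. 0)" for \<phi>
    using sq[of \<phi>] z0 by metis
  have cyc: "\<phi> \<in> cycles G r a b \<Longrightarrow> \<Phi> \<phi> \<in> cycles G r2 a b" for \<phi> a b
    using ch d1 z by (auto simp: cycles_def)
  have cyc2: "\<phi> \<in> cycles G r2 a b \<Longrightarrow> \<Phi> \<phi> \<in> cycles G r a b" for \<phi> a b
    using ch d2 z by (auto simp: cycles_def)
  show ?thesis unfolding cohom_pmon
  proof (rule abstract_iso[where \<Phi> = \<Phi>])
    show "addsub (cycles G r i j)" "addsub (boundaries G r i j)" "addsub (boundaries G r2 i j)"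
      by (rule addsub_cycles addsub_boundaries)+
    show "\<Phi> (\<lambda>S. x S + y S) = (\<lambda>S. \<Phi> x S + \<Phi> y S)" for x y
      unfolding \<Phi>_def by (simp add: algebra_simps)
    show "\<Phi> ` cycles G r i j = cycles G r2 i j"
    proof (intro equalityI subsetI)
      fix x assume "x \<in> \<Phi> ` cycles G r i j" then show "x \<in> cycles G r2 i j" using cyc by blast
    next
      fix x assume "x \<in> cycles G r2 i j"
      then have "\<Phi> x \<in> cycles G r i j" by (rule cyc2)
      then show "x \<in> \<Phi> ` cycles G r i j" using sq[of x] by (metis image_eqI)
    qed
    fix x assume x: "x \<in> cycles G r i j"
    show "\<Phi> x \<in> boundaries G r2 i j \<longleftrightarrow> x \<in> boundaries G r i j"
    proof
      assume "\<Phi> x \<in> boundaries G r2 i j"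
      then obtain y where y: "y \<in> chains G (i - 1) j" "\<Phi> x = diff G r2 y" unfolding in_boundaries by blast
      then have "x = diff G r (\<Phi> y)" using sq[of x] d2[of y] by simp
      then show "x \<in> boundaries G r i j" unfolding in_boundaries using ch[OF y(1)] by blast
    next
      assume "x \<in> boundaries G r i j"
      then obtain y where y: "y \<in> chains G (i - 1) j" "x = diff G r y" unfolding in_boundaries by blast
      then have "\<Phi> x = diff G r2 (\<Phi> y)" using d1[of y] by simp
      then show "\<Phi> x \<in> boundaries G r2 i j" unfolding in_boundaries using ch[OF y(1)] by blast
    qed
  qed
qed

locale pend =
  fixes G :: "('v,'e) graph" and e :: 'e and v w :: 'v
  assumes wf: "wf_graph G" and eE: "e \<in> edges G" and ends_e: "ends G e = {v,w}" and vw: "v \<noteq> w"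
    and only: "\<And>f. f \<in> edges G \<Longrightarrow> v \<in> ends G f \<Longrightarrow> f = e"
begin

abbreviation "G' \<equiv> contract G e"
abbreviation "vc \<equiv> vclass G e"

lemma vc_eq: "vc x = (if x = v \<or> x = w then {v,w} else {x})"
  by (auto simp: vclass_def ends_e)
lemma vG: "v \<in> verts G" "w \<in> verts G"
  using wf_ends[OF wf eE] ends_e by auto
lemma verts': "verts G' = vc ` verts G" by (simp add: contract_def)
lemma edges': "edges G' = edges G - {e}" by (simp add: contract_def)
lemma ends': "ends G' f = vc ` ends G f" by (simp add: contract_def)

lemma vc_eq_iff: "vc x = vc y \<longleftrightarrow> x = y \<or> (x \<in> {v,w} \<and> y \<in> {v,w})"
proof -
  have "{x} \<noteq> {v,w}" for x using vw by (metis doubleton_eq_iff insert_absorb2 singleton_insert_inj_eq)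
  then show ?thesis unfolding vc_eq by (auto dest: sym)
qed
lemma vc_inj: "x \<noteq> v \<Longrightarrow> y \<noteq> v \<Longrightarrow> vc x = vc y \<Longrightarrow> x = y"
  unfolding vc_eq_iff by auto
lemma vc_vw: "vc v = vc w" unfolding vc_eq_iff by simp

lemma notv: "f \<in> edges G \<Longrightarrow> f \<noteq> e \<Longrightarrow> v \<notin> ends G f"
  using only by blast

lemma rep: "X \<in> verts G' \<Longrightarrow> \<exists>x\<in>verts G. x \<noteq> v \<and> X = vc x"
proof -
  assume "X \<in> verts G'"
  then obtain x where x: "x \<in> verts G" "X = vc x" unfolding verts' by blast
  show ?thesis
  proof (cases "x = v")
    case True then show ?thesis using x vG vw vc_vw by metis
  next
    case False then show ?thesis using x by blast
  qed
qed

lemma wf': "wf_graph G'"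
  unfolding wf_graph_def
proof (intro conjI ballI)
  show "finite (verts G')" "finite (edges G')" using wf_fin[OF wf] by (auto simp: verts' edges')
next
  fix f assume f: "f \<in> edges G'"
  then have fE: "f \<in> edges G" by (simp add: edges')
  show "ends G' f \<subseteq> verts G'" using wf_ends[OF wf fE] by (auto simp: ends' verts')
  have "ends G f \<noteq> {}" "finite (ends G f)" using wf_ends_ne[OF wf fE] wf_ends_fin[OF wf fE] by auto
  then show "1 \<le> card (ends G' f)" by (simp add: ends' card_gt_0_iff Suc_le_eq)
  have "card (ends G' f) \<le> card (ends G f)" unfolding ends' by (rule card_image_le) (rule wf_ends_fin[OF wf fE])
  also have "\<dots> \<le> 2" using wf fE by (auto simp: wf_graph_def)
  finally show "card (ends G' f) \<le> 2" .
qed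

lemma conn_e: "e \<in> s \<Longrightarrow> (v,w) \<in> conn_rel G s"
  using conn_step[of e s v G w] ends_e vG by simp

lemma R_fwd:
  assumes "(x,y) \<in> conn_rel G s" "s \<subseteq> edges G"
  shows "(vc x, vc y) \<in> conn_rel G' (s - {e})"
proof -
  have x: "x \<in> verts G" and p: "(adj_in G s)\<^sup>*\<^sup>* x y" using assms(1) by (auto simp: conn_rel_def)
  have "y \<in> verts G \<and> (vc x, vc y) \<in> conn_rel G' (s - {e})" using p
  proof (induction rule: rtranclp_induct)
    case base then show ?case using x conn_refl[of "vc x" G'] by (simp add: verts')
  next
    case (step y z)
    from step(2) obtain f where f: "f \<in> s" "y \<in> ends G f" "z \<in> ends G f" by (auto simp: adj_in_def)
    have fE: "f \<in> edges G" using f(1) assms(2) by auto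
    have z: "z \<in> verts G" using wf_ends[OF wf fE] f(3) by auto
    have y: "y \<in> verts G" using step.IH by simp
    show ?case
    proof (cases "f = e")
      case True
      then have "vc y = vc z" using f ends_e vc_eq_iff by simp
      then show ?thesis using step.IH z by simp
    next
      case False
      have yz: "(vc y, vc z) \<in> conn_rel G' (s - {e})"
        using conn_step[of f "s - {e}" "vc y" G' "vc z"] f False y z by (simp add: ends' verts')
      have "(vc x, vc y) \<in> conn_rel G' (s - {e})" using step.IH by simp
      then show ?thesis using conn_trans[OF _ yz] z by blast
    qed
  qed
  then show ?thesis by simp
qed

lemma R1_bwd:
  assumes p: "(adj_in G' s')\<^sup>*\<^sup>* X Y" and s': "s' \<subseteq> edges G - {e}" and X: "X = vc x" and x: "x \<in> verts G"
  shows "\<exists>y\<in>verts G. Y = vc y \<and> (x,y) \<in> conn_rel G (insert e s')"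
  using p
proof (induction rule: rtranclp_induct)
  case base then show ?case using X x conn_refl[OF x] by (intro bexI[of _ x]) auto
next
  case (step Y Z)
  from step.IH obtain y where y: "y \<in> verts G" "Y = vc y" "(x,y) \<in> conn_rel G (insert e s')" by blast
  from step(2) obtain f where f: "f \<in> s'" "Y \<in> vc ` ends G f" "Z \<in> vc ` ends G f" by (auto simp: adj_in_def ends')
  then obtain a b where ab: "a \<in> ends G f" "b \<in> ends G f" "Y = vc a" "Z = vc b" by blast
  have fE: "f \<in> edges G" using f(1) s' by auto
  have abV: "a \<in> verts G" "b \<in> verts G" using wf_ends[OF wf fE] ab by auto
  have ya: "(y,a) \<in> conn_rel G (insert e s')"
  proof -
    have "vc y = vc a" using y ab by simp
    then have "y = a \<or> (y \<in> {v,w} \<and> a \<in> {v,w})" using vc_eq_iff by simp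
    then show ?thesis
    proof
      assume "y = a" then show ?thesis using conn_refl abV by simp
    next
      assume "y \<in> {v,w} \<and> a \<in> {v,w}"
      then show ?thesis using conn_step[of e "insert e s'" y G a] ends_e y(1) abV by auto
    qed
  qed
  have ab2: "(a,b) \<in> conn_rel G (insert e s')"
    using conn_step[of f "insert e s'" a G b] f(1) ab abV by simp
  have "(x,b) \<in> conn_rel G (insert e s')" using conn_trans[OF conn_trans[OF y(3) ya] ab2] .
  then show ?case using abV(2) ab(4) by blast
qed

lemma R1:
  assumes s': "s' \<subseteq> edges G - {e}" and x: "x \<in> verts G" and y: "y \<in> verts G"
  shows "(x,y) \<in> conn_rel G (insert e s') \<longleftrightarrow> (vc x, vc y) \<in> conn_rel G' s'"
proof
  assume "(x,y) \<in> conn_rel G (insert e s')"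
  moreover have "insert e s' - {e} = s'" using s' by auto
  ultimately show "(vc x, vc y) \<in> conn_rel G' s'" using R_fwd[of x y "insert e s'"] s' eE by auto
next
  assume "(vc x, vc y) \<in> conn_rel G' s'"
  then have "(adj_in G' s')\<^sup>*\<^sup>* (vc x) (vc y)" by (simp add: conn_rel_def)
  then obtain y' where y': "y' \<in> verts G" "vc y = vc y'" "(x,y') \<in> conn_rel G (insert e s')"
    using R1_bwd[OF _ s' refl x] by blast
  then have "y = y' \<or> (y \<in> {v,w} \<and> y' \<in> {v,w})" using vc_eq_iff by simp
  then have "(y',y) \<in> conn_rel G (insert e s')"
  proof
    assume "y = y'" then show ?thesis using conn_refl y by simp
  next
    assume "y \<in> {v,w} \<and> y' \<in> {v,w}"
    then show ?thesis using conn_step[of e "insert e s'" y' G y] ends_e y y'(1) by auto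
  qed
  then show "(x,y) \<in> conn_rel G (insert e s')" using conn_trans[OF y'(3)] by blast
qed

lemma R3:
  assumes s': "s' \<subseteq> edges G - {e}" and c: "(v,y) \<in> conn_rel G s'"
  shows "y = v"
proof -
  have "(adj_in G s')\<^sup>*\<^sup>* v y" using c by (simp add: conn_rel_def)
  then show ?thesis
  proof (induction rule: rtranclp_induct)
    case base then show ?case by simp
  next
    case (step y z)
    from step(2) obtain f where f: "f \<in> s'" "y \<in> ends G f" by (auto simp: adj_in_def)
    then show ?case using step.IH only[of f] s' by auto
  qed
qed

lemma R3': "s' \<subseteq> edges G - {e} \<Longrightarrow> (y,v) \<in> conn_rel G s' \<Longrightarrow> y = v"
  using R3 conn_sym by metis

lemma R2_bwd:
  assumes p: "(adj_in G' s')\<^sup>*\<^sup>* X Y" and s': "s' \<subseteq> edges G - {e}" and X: "X = vc x" and x: "x \<in> verts G" "x \<noteq> v"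
  shows "\<exists>y\<in>verts G. y \<noteq> v \<and> Y = vc y \<and> (x,y) \<in> conn_rel G s'"
  using p
proof (induction rule: rtranclp_induct)
  case base then show ?case using X x conn_refl[OF x(1)] by (intro bexI[of _ x]) auto
next
  case (step Y Z)
  from step.IH obtain y where y: "y \<in> verts G" "y \<noteq> v" "Y = vc y" "(x,y) \<in> conn_rel G s'" by blast
  from step(2) obtain f where f: "f \<in> s'" "Y \<in> vc ` ends G f" "Z \<in> vc ` ends G f" by (auto simp: adj_in_def ends')
  then obtain a b where ab: "a \<in> ends G f" "b \<in> ends G f" "Y = vc a" "Z = vc b" by blast
  have fE: "f \<in> edges G" "f \<noteq> e" using f(1) s' by auto
  have abV: "a \<in> verts G" "b \<in> verts G" using wf_ends[OF wf fE(1)] ab by auto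
  have abv: "a \<noteq> v" "b \<noteq> v" using notv[OF fE] ab by auto
  have "a = y" using vc_inj[OF abv(1) y(2)] y(3) ab(3) by simp
  moreover have ab2: "(a,b) \<in> conn_rel G s'"
    using conn_step[of f s' a G b] f(1) ab abV by simp
  ultimately have "(x,b) \<in> conn_rel G s'" using conn_trans[OF y(4)] by blast
  then show ?case using abV(2) abv(2) ab(4) by blast
qed

lemma R2:
  assumes s': "s' \<subseteq> edges G - {e}" and x: "x \<in> verts G" "x \<noteq> v" and y: "y \<in> verts G" "y \<noteq> v"
  shows "(x,y) \<in> conn_rel G s' \<longleftrightarrow> (vc x, vc y) \<in> conn_rel G' s'"
proof
  assume "(x,y) \<in> conn_rel G s'"
  moreover have "s' - {e} = s'" using s' by auto
  ultimately show "(vc x, vc y) \<in> conn_rel G' s'" using R_fwd[of x y s'] s' by auto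
next
  assume "(vc x, vc y) \<in> conn_rel G' s'"
  then have "(adj_in G' s')\<^sup>*\<^sup>* (vc x) (vc y)" by (simp add: conn_rel_def)
  then obtain y' where y': "y' \<in> verts G" "y' \<noteq> v" "vc y = vc y'" "(x,y') \<in> conn_rel G s'"
    using R2_bwd[OF _ s' refl x] by blast
  then have "y = y'" using vc_inj y(2) by blast
  then show "(x,y) \<in> conn_rel G s'" using y'(4) by simp
qed

end

context pend
begin

definition liftE :: "('v set, 'e) estate \<Rightarrow> ('v,'e) estate" where
  "liftE S' = mkstate G (insert e (fst S')) (\<lambda>x. vcol G' S' (vc x))"
definition liftA :: "bool \<Rightarrow> ('v set, 'e) estate \<Rightarrow> ('v,'e) estate" where
  "liftA a S' = mkstate G (fst S') (\<lambda>x. if x = v then a else vcol G' S' (vc x))"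
definition down :: "('v,'e) estate \<Rightarrow> ('v set, 'e) estate" where
  "down S = mkstate G' (fst S - {e}) (\<lambda>X. \<exists>x\<in>verts G - {v}. vc x = X \<and> vcol G S x)"

lemma st'_fst: "S' \<in> states G' \<Longrightarrow> fst S' \<subseteq> edges G - {e}"
  using states_fst[of S' G'] by (simp add: edges')

lemma liftE_props:
  assumes S': "S' \<in> states G'"
  shows "liftE S' \<in> states G" "fst (liftE S') = insert e (fst S')"
    "\<And>x. x \<in> verts G \<Longrightarrow> vcol G (liftE S') x = vcol G' S' (vc x)"
proof -
  have s': "fst S' \<subseteq> edges G - {e}" using st'_fst[OF S'] .
  show "liftE S' \<in> states G" unfolding liftE_def using s' eE by (intro mkstate_state) auto
  show "fst (liftE S') = insert e (fst S')" by (simp add: liftE_def)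
  fix x assume x: "x \<in> verts G"
  show "vcol G (liftE S') x = vcol G' S' (vc x)"
    unfolding liftE_def
  proof (rule vcol_mkstate[OF x])
    fix y z assume yz: "(y,z) \<in> conn_rel G (insert e (fst S'))"
    have "y \<in> verts G" "z \<in> verts G" using conn_verts[OF yz] by auto
    then have "(vc y, vc z) \<in> conn_rel G' (fst S')" using R1[OF s'] yz by blast
    then show "vcol G' S' (vc y) = vcol G' S' (vc z)" by (rule vcol_conn)
  qed
qed

lemma liftA_props:
  assumes S': "S' \<in> states G'"
  shows "liftA a S' \<in> states G" "fst (liftA a S') = fst S'"
    "\<And>x. x \<in> verts G \<Longrightarrow> vcol G (liftA a S') x = (if x = v then a else vcol G' S' (vc x))"
proof -
  have s': "fst S' \<subseteq> edges G - {e}" using st'_fst[OF S'] .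
  show "liftA a S' \<in> states G" unfolding liftA_def using s' by (intro mkstate_state) auto
  show "fst (liftA a S') = fst S'" by (simp add: liftA_def)
  fix x assume x: "x \<in> verts G"
  show "vcol G (liftA a S') x = (if x = v then a else vcol G' S' (vc x))"
    unfolding liftA_def
  proof (rule vcol_mkstate[OF x])
    fix y z assume yz: "(y,z) \<in> conn_rel G (fst S')"
    show "(if y = v then a else vcol G' S' (vc y)) = (if z = v then a else vcol G' S' (vc z))"
    proof (cases "y = v")
      case True then show ?thesis using R3[OF s'] yz by simp
    next
      case False
      then have "z \<noteq> v" using R3'[OF s'] yz by blast
      moreover have "y \<in> verts G" "z \<in> verts G" using conn_verts[OF yz] by auto
      ultimately have "(vc y, vc z) \<in> conn_rel G' (fst S')" using R2[OF s', of y z] yz False by blast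
      then show ?thesis using vcol_conn False \<open>z \<noteq> v\<close> by simp
    qed
  qed
qed

lemma down_props:
  assumes S: "S \<in> states G"
  shows "down S \<in> states G'" "fst (down S) = fst S - {e}"
    "\<And>x. x \<in> verts G \<Longrightarrow> x \<noteq> v \<Longrightarrow> vcol G' (down S) (vc x) = vcol G S x"
proof -
  have s: "fst S \<subseteq> edges G" using states_fst[OF S] .
  have s': "fst S - {e} \<subseteq> edges G - {e}" using s by auto
  show "down S \<in> states G'" unfolding down_def using s' by (intro mkstate_state) (auto simp: edges')
  show "fst (down S) = fst S - {e}" by (simp add: down_def)
  have fx: "(\<exists>x\<in>verts G - {v}. vc x = vc y \<and> vcol G S x) = vcol G S y" if y: "y \<in> verts G" "y \<noteq> v" for y
    using vc_inj y by blast
  have cG: "(x,y) \<in> conn_rel G (fst S)" if x: "x \<in> verts G" "x \<noteq> v" and y: "y \<in> verts G" "y \<noteq> v"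
     and c: "(vc x, vc y) \<in> conn_rel G' (fst S - {e})" for x y
  proof (cases "e \<in> fst S")
    case True
    then have "insert e (fst S - {e}) = fst S" by auto
    then show ?thesis using R1[OF s' x(1) y(1)] c by simp
  next
    case False
    then have "fst S - {e} = fst S" by auto
    then show ?thesis using R2[OF s' x y] c by simp
  qed
  fix x assume x: "x \<in> verts G" "x \<noteq> v"
  show "vcol G' (down S) (vc x) = vcol G S x"
    unfolding down_def
  proof (subst vcol_mkstate)
    show "vc x \<in> verts G'" using x by (simp add: verts')
    show "(\<exists>x'\<in>verts G - {v}. vc x' = vc x \<and> vcol G S x') = vcol G S x" using fx[OF x] .
    fix Y Z assume YZ: "(Y,Z) \<in> conn_rel G' (fst S - {e})"
    then obtain y z where y: "y \<in> verts G" "y \<noteq> v" "Y = vc y" and z: "z \<in> verts G" "z \<noteq> v" "Z = vc z"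
      using rep conn_verts by metis
    have "(y,z) \<in> conn_rel G (fst S)" using cG[OF y(1,2) z(1,2)] YZ y z by simp
    then have "vcol G S y = vcol G S z" by (rule vcol_conn)
    then show "(\<exists>x\<in>verts G - {v}. vc x = Y \<and> vcol G S x) = (\<exists>x\<in>verts G - {v}. vc x = Z \<and> vcol G S x)"
      using fx[OF y(1,2)] fx[OF z(1,2)] y(3) z(3) by simp
  qed
qed

lemma down_liftE: assumes S': "S' \<in> states G'" shows "down (liftE S') = S'"
proof (rule state_eqI[OF down_props(1)[OF liftE_props(1)[OF S']] S'])
  have "e \<notin> fst S'" using st'_fst[OF S'] by auto
  then show "fst (down (liftE S')) = fst S'"
    using down_props(2)[OF liftE_props(1)[OF S']] liftE_props(2)[OF S'] by simp
  fix X assume "X \<in> verts G'"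
  then obtain x where x: "x \<in> verts G" "x \<noteq> v" "X = vc x" using rep by blast
  show "vcol G' (down (liftE S')) X = vcol G' S' X"
    using down_props(3)[OF liftE_props(1)[OF S'] x(1,2)] liftE_props(3)[OF S' x(1)] x(3) by simp
qed

lemma down_liftA: assumes S': "S' \<in> states G'" shows "down (liftA a S') = S'"
proof (rule state_eqI[OF down_props(1)[OF liftA_props(1)[OF S']] S'])
  have "e \<notin> fst S'" using st'_fst[OF S'] by auto
  then show "fst (down (liftA a S')) = fst S'"
    using down_props(2)[OF liftA_props(1)[OF S']] liftA_props(2)[OF S'] by simp
  fix X assume "X \<in> verts G'"
  then obtain x where x: "x \<in> verts G" "x \<noteq> v" "X = vc x" using rep by blast
  show "vcol G' (down (liftA a S')) X = vcol G' S' X"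
    using down_props(3)[OF liftA_props(1)[OF S'] x(1,2)] liftA_props(3)[OF S' x(1)] x by simp
qed

lemma liftE_down: assumes S: "S \<in> states G" and eS: "e \<in> fst S" shows "liftE (down S) = S"
proof (rule state_eqI[OF liftE_props(1)[OF down_props(1)[OF S]] S])
  show "fst (liftE (down S)) = fst S"
    using liftE_props(2)[OF down_props(1)[OF S]] down_props(2)[OF S] eS by auto
  fix x assume x: "x \<in> verts G"
  have l: "vcol G (liftE (down S)) x = vcol G' (down S) (vc x)" using liftE_props(3)[OF down_props(1)[OF S] x] .
  show "vcol G (liftE (down S)) x = vcol G S x"
  proof (cases "x = v")
    case False then show ?thesis using l down_props(3)[OF S x False] by simp
  next
    case True
    have "vcol G S v = vcol G S w" using vcol_conn[OF conn_e[OF eS]] .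
    then show ?thesis using l True vc_vw down_props(3)[OF S vG(2)] vw by simp
  qed
qed

lemma liftA_down: assumes S: "S \<in> states G" and eS: "e \<notin> fst S" shows "liftA (vcol G S v) (down S) = S"
proof (rule state_eqI[OF liftA_props(1)[OF down_props(1)[OF S]] S])
  show "fst (liftA (vcol G S v) (down S)) = fst S"
    using liftA_props(2)[OF down_props(1)[OF S]] down_props(2)[OF S] eS by auto
  fix x assume x: "x \<in> verts G"
  show "vcol G (liftA (vcol G S v) (down S)) x = vcol G S x"
    using liftA_props(3)[OF down_props(1)[OF S] x] down_props(3)[OF S x] by auto
qed

lemma liftA_vcol_v: "S' \<in> states G' \<Longrightarrow> vcol G (liftA a S') v = a"
  using liftA_props(3)[OF _ vG(1)] by simp

lemma liftA_inj: "S1 \<in> states G' \<Longrightarrow> S2 \<in> states G' \<Longrightarrow> liftA a S1 = liftA b S2 \<longleftrightarrow> a = b \<and> S1 = S2"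
proof
  assume S: "S1 \<in> states G'" "S2 \<in> states G'" and eq: "liftA a S1 = liftA b S2"
  have "S1 = down (liftA a S1)" using down_liftA[OF S(1)] by simp
  also have "\<dots> = down (liftA b S2)" using eq by simp
  also have "\<dots> = S2" using down_liftA[OF S(2)] .
  finally have "S1 = S2" .
  moreover have "a = b" using liftA_vcol_v[OF S(1), of a] liftA_vcol_v[OF S(2), of b] eq by simp
  ultimately show "a = b \<and> S1 = S2" by simp
qed auto

lemma liftE_inj: "S1 \<in> states G' \<Longrightarrow> S2 \<in> states G' \<Longrightarrow> liftE S1 = liftE S2 \<longleftrightarrow> S1 = S2"
proof
  assume S: "S1 \<in> states G'" "S2 \<in> states G'" and eq: "liftE S1 = liftE S2"
  have "S1 = down (liftE S1)" using down_liftE[OF S(1)] by simp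
  also have "\<dots> = down (liftE S2)" using eq by simp
  also have "\<dots> = S2" using down_liftE[OF S(2)] .
  finally show "S1 = S2" .
qed simp

lemma liftA_ne_liftE: "S1 \<in> states G' \<Longrightarrow> S2 \<in> states G' \<Longrightarrow> liftA a S1 \<noteq> liftE S2"
proof
  assume S: "S1 \<in> states G'" "S2 \<in> states G'" and eq: "liftA a S1 = liftE S2"
  have "e \<notin> fst (liftA a S1)" using liftA_props(2)[OF S(1)] st'_fst[OF S(1)] by auto
  moreover have "e \<in> fst (liftE S2)" using liftE_props(2)[OF S(2)] by auto
  ultimately show False using eq by simp
qed

lemma states_split:
  "states G = liftA True ` states G' \<union> liftA False ` states G' \<union> liftE ` states G'"
proof (intro equalityI subsetI)
  fix S assume S: "S \<in> states G"
  show "S \<in> liftA True ` states G' \<union> liftA False ` states G' \<union> liftE ` states G'"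
  proof (cases "e \<in> fst S")
    case True then show ?thesis using liftE_down[OF S True] down_props(1)[OF S] by (metis UnI2 image_eqI)
  next
    case False
    then have "S = liftA (vcol G S v) (down S)" using liftA_down[OF S] by simp
    then show ?thesis using down_props(1)[OF S] by (cases "vcol G S v") auto
  qed
next
  fix S assume "S \<in> liftA True ` states G' \<union> liftA False ` states G' \<union> liftE ` states G'"
  then show "S \<in> states G" using liftA_props(1) liftE_props(1) by blast
qed

end

lemma colored_comps: "S \<in> states H \<Longrightarrow> {Q \<in> comps H (fst S). snd S Q} = cls H (fst S) ` {x \<in> verts H. vcol H S x}"
proof (intro equalityI subsetI)
  fix Q assume S: "S \<in> states H" and Q: "Q \<in> {Q \<in> comps H (fst S). snd S Q}"
  then obtain x where x: "x \<in> verts H" "Q = cls H (fst S) x" unfolding comps_iff by blast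
  then have "vcol H S x" using Q by (simp add: vcol_def)
  then show "Q \<in> cls H (fst S) ` {x \<in> verts H. vcol H S x}" using x by blast
next
  fix Q assume "Q \<in> cls H (fst S) ` {x \<in> verts H. vcol H S x}"
  then obtain x where x: "x \<in> verts H" "vcol H S x" "Q = cls H (fst S) x" by blast
  then show "Q \<in> {Q \<in> comps H (fst S). snd S Q}" using cls_in_comps[OF x(1)] by (simp add: vcol_def)
qed

lemma jdeg_cls: "S \<in> states H \<Longrightarrow> jdeg H S = int (card (cls H (fst S) ` {x \<in> verts H. vcol H S x}))"
  unfolding jdeg_def by (simp add: colored_comps)

context pend
begin

lemma imgE:
  assumes s': "s' \<subseteq> edges G - {e}" and x: "x \<in> verts G"
  shows "vc ` cls G (insert e s') x = cls G' s' (vc x)"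
proof (intro equalityI subsetI)
  fix Y assume "Y \<in> vc ` cls G (insert e s') x"
  then obtain y where y: "(x,y) \<in> conn_rel G (insert e s')" "Y = vc y" by (auto simp: mem_cls)
  then show "Y \<in> cls G' s' (vc x)" using R1[OF s' x] conn_verts[OF y(1)] by (simp add: mem_cls)
next
  fix Y assume Y: "Y \<in> cls G' s' (vc x)"
  then have c: "(vc x, Y) \<in> conn_rel G' s'" by (simp add: mem_cls)
  then obtain y where y: "y \<in> verts G" "Y = vc y" using conn_verts[OF c] by (auto simp: verts')
  then have "(x,y) \<in> conn_rel G (insert e s')" using R1[OF s' x y(1)] c by simp
  then show "Y \<in> vc ` cls G (insert e s') x" using y(2) by (auto simp: mem_cls)
qed

lemma imgA:
  assumes s': "s' \<subseteq> edges G - {e}" and x: "x \<in> verts G" "x \<noteq> v"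
  shows "vc ` cls G s' x = cls G' s' (vc x)"
proof (intro equalityI subsetI)
  fix Y assume "Y \<in> vc ` cls G s' x"
  then obtain y where y: "(x,y) \<in> conn_rel G s'" "Y = vc y" by (auto simp: mem_cls)
  have "y \<noteq> v" using R3'[OF s'] y(1) x(2) by blast
  then show "Y \<in> cls G' s' (vc x)" using R2[OF s' x, of y] conn_verts[OF y(1)] y by (simp add: mem_cls)
next
  fix Y assume Y: "Y \<in> cls G' s' (vc x)"
  then have c: "(vc x, Y) \<in> conn_rel G' s'" by (simp add: mem_cls)
  then obtain y where y: "y \<in> verts G" "y \<noteq> v" "Y = vc y" using conn_verts[OF c] rep by metis
  then have "(x,y) \<in> conn_rel G s'" using R2[OF s' x y(1,2)] c by simp
  then show "Y \<in> vc ` cls G s' x" using y(3) by (auto simp: mem_cls)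
qed

lemma jdeg_liftE:
  assumes S': "S' \<in> states G'"
  shows "jdeg G (liftE S') = jdeg G' S'"
proof -
  let ?s = "fst S'"
  have s': "?s \<subseteq> edges G - {e}" using st'_fst[OF S'] .
  let ?P = "{x \<in> verts G. vcol G' S' (vc x)}"
  let ?c = "cls G (insert e ?s)"
  have P: "{x \<in> verts G. vcol G (liftE S') x} = ?P" using liftE_props(3)[OF S'] by auto
  have P': "{X \<in> verts G'. vcol G' S' X} = vc ` ?P" by (auto simp: verts')
  have img: "cls G' ?s ` (vc ` ?P) = (\<lambda>Q. vc ` Q) ` (?c ` ?P)"
    using imgE[OF s'] by (auto simp: image_image)
  have inj: "inj_on (\<lambda>Q. vc ` Q) (?c ` ?P)"
  proof (rule inj_onI)
    fix Q1 Q2 assume "Q1 \<in> ?c ` ?P" "Q2 \<in> ?c ` ?P" and eq: "vc ` Q1 = vc ` Q2"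
    then obtain x1 x2 where x: "x1 \<in> verts G" "x2 \<in> verts G" "Q1 = ?c x1" "Q2 = ?c x2" by blast
    then have "cls G' ?s (vc x1) = cls G' ?s (vc x2)" using eq imgE[OF s'] by simp
    then have "(vc x1, vc x2) \<in> conn_rel G' ?s" using cls_eq_iff[of "vc x1" G' "vc x2" ?s] x by (simp add: verts')
    then have "(x1, x2) \<in> conn_rel G (insert e ?s)" using R1[OF s' x(1,2)] by simp
    then show "Q1 = Q2" using x cls_eq_iff by metis
  qed
  have "jdeg G (liftE S') = int (card (?c ` ?P))"
    using jdeg_cls[OF liftE_props(1)[OF S']] P liftE_props(2)[OF S'] by simp
  also have "\<dots> = int (card ((\<lambda>Q. vc ` Q) ` (?c ` ?P)))" using card_image[OF inj] by simp
  also have "\<dots> = jdeg G' S'" using jdeg_cls[OF S'] P' img by simp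
  finally show ?thesis .
qed

lemma jdeg_liftA:
  assumes S': "S' \<in> states G'"
  shows "jdeg G (liftA a S') = jdeg G' S' + (if a then 1 else 0)"
proof -
  let ?s = "fst S'"
  have s': "?s \<subseteq> edges G - {e}" using st'_fst[OF S'] .
  let ?P = "{x \<in> verts G. x \<noteq> v \<and> vcol G' S' (vc x)}"
  let ?c = "cls G ?s"
  have cv: "?c v = {v}" using R3[OF s'] conn_refl[OF vG(1)] by (auto simp: mem_cls)
  have P: "{x \<in> verts G. vcol G (liftA a S') x} = (if a then {v} else {}) \<union> ?P"
    using liftA_props(3)[OF S'] vG(1) by (auto split: if_splits)
  have P': "{X \<in> verts G'. vcol G' S' X} = vc ` ?P"
  proof (intro equalityI subsetI)
    fix X assume "X \<in> {X \<in> verts G'. vcol G' S' X}"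
    then show "X \<in> vc ` ?P" using rep by blast
  qed (auto simp: verts')
  have img: "cls G' ?s ` (vc ` ?P) = (\<lambda>Q. vc ` Q) ` (?c ` ?P)"
    using imgA[OF s'] by (auto simp: image_image)
  have inj: "inj_on (\<lambda>Q. vc ` Q) (?c ` ?P)"
  proof (rule inj_onI)
    fix Q1 Q2 assume "Q1 \<in> ?c ` ?P" "Q2 \<in> ?c ` ?P" and eq: "vc ` Q1 = vc ` Q2"
    then obtain x1 x2 where x: "x1 \<in> verts G" "x2 \<in> verts G" "x1 \<noteq> v" "x2 \<noteq> v" "Q1 = ?c x1" "Q2 = ?c x2" by blast
    then have "cls G' ?s (vc x1) = cls G' ?s (vc x2)" using eq imgA[OF s'] by simp
    then have "(vc x1, vc x2) \<in> conn_rel G' ?s" using cls_eq_iff[of "vc x1" G' "vc x2" ?s] x by (simp add: verts')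
    then have "(x1, x2) \<in> conn_rel G ?s" using R2[OF s' x(1,3) x(2,4)] by simp
    then show "Q1 = Q2" using x cls_eq_iff by metis
  qed
  have nv: "{v} \<notin> ?c ` ?P"
  proof
    assume "{v} \<in> ?c ` ?P"
    then obtain x where x: "x \<in> verts G" "x \<noteq> v" "{v} = ?c x" by blast
    then have "x \<in> {v}" using cls_self[OF x(1)] by simp
    then show False using x(2) by simp
  qed
  have fin: "finite (?c ` ?P)" using wf_fin[OF wf] by simp
  have "jdeg G (liftA a S') = int (card (?c ` ((if a then {v} else {}) \<union> ?P)))"
    using jdeg_cls[OF liftA_props(1)[OF S']] P liftA_props(2)[OF S'] by simp
  also have "\<dots> = int (card (?c ` ?P)) + (if a then 1 else 0)"
    using cv nv fin by (cases a) auto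
  also have "int (card (?c ` ?P)) = int (card ((\<lambda>Q. vc ` Q) ` (?c ` ?P)))" using card_image[OF inj] by simp
  also have "\<dots> = jdeg G' S'" using jdeg_cls[OF S'] P' img by simp
  finally show ?thesis .
qed

lemma ideg_liftA: "S' \<in> states G' \<Longrightarrow> ideg (liftA a S') = ideg S'"
  using liftA_props(2) by (simp add: ideg_def)

lemma ideg_liftE: assumes S': "S' \<in> states G'" shows "ideg (liftE S') = ideg S' + 1"
proof -
  have s': "fst S' \<subseteq> edges G - {e}" using st'_fst[OF S'] .
  then have "finite (fst S')" "e \<notin> fst S'" using wf_fin[OF wf] finite_subset by auto
  then show ?thesis using liftE_props(2)[OF S'] by (simp add: ideg_def)
qed

end

context pend
begin

definition mulW :: "bool \<Rightarrow> ('v set, 'e) estate \<Rightarrow> ('v set, 'e) estate option" where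
  "mulW a S' = (if a \<and> vcol G' S' (vc v) then None else Some (setAt G' (vc v) (a \<or> vcol G' S' (vc v)) S'))"

lemma Wv': "vc v \<in> verts G'" using vG by (simp add: verts')

lemma touchA:
  assumes s': "s' \<subseteq> edges G - {e}" and e': "e' \<in> edges G" "e' \<noteq> e" and x: "x \<in> verts G" "x \<noteq> v"
  shows "touch G s' e' x \<longleftrightarrow> touch G' s' e' (vc x)"
proof -
  have u: "\<And>u. u \<in> ends G e' \<Longrightarrow> u \<in> verts G \<and> u \<noteq> v" using wf_ends[OF wf e'(1)] notv[OF e'] by auto
  show ?thesis unfolding touch_def ends' using R2[OF s' x] u by auto
qed

lemma touchE:
  assumes s': "s' \<subseteq> edges G - {e}" and e': "e' \<in> edges G" and x: "x \<in> verts G"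
  shows "touch G (insert e s') e' x \<longleftrightarrow> touch G' s' e' (vc x)"
proof -
  have u: "\<And>u. u \<in> ends G e' \<Longrightarrow> u \<in> verts G" using wf_ends[OF wf e'(1)] by auto
  show ?thesis unfolding touch_def ends' using R1[OF s' x] u by auto
qed

lemma touch_v:
  assumes s': "s' \<subseteq> edges G - {e}" and e': "e' \<in> edges G" "e' \<noteq> e"
  shows "\<not> touch G s' e' v"
  unfolding touch_def using R3[OF s'] notv[OF e'] by blast

lemma L1:
  assumes S': "S' \<in> states G'" and e': "e' \<in> edges G" "e' \<noteq> e"
  shows "add_edge G (liftA a S') e' = map_option (liftA a) (add_edge G' S' e')"
proof -
  let ?s = "fst S'"
  have s': "?s \<subseteq> edges G - {e}" using st'_fst[OF S'] .
  have e'': "e' \<in> edges G'" using e' by (simp add: edges')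
  have LS: "liftA a S' \<in> states G" "fst (liftA a S') = ?s" using liftA_props[OF S'] by auto
  have vL: "\<And>x. x \<in> verts G \<Longrightarrow> vcol G (liftA a S') x = (if x = v then a else vcol G' S' (vc x))"
    using liftA_props(3)[OF S'] .
  have u: "\<And>u. u \<in> ends G e' \<Longrightarrow> u \<in> verts G \<and> u \<noteq> v" using wf_ends[OF wf e'(1)] notv[OF e'] by auto
  have disc: "(\<exists>p\<in>ends G e'. \<exists>q\<in>ends G e'. (p,q) \<notin> conn_rel G ?s) \<longleftrightarrow>
              (\<exists>p\<in>ends G' e'. \<exists>q\<in>ends G' e'. (p,q) \<notin> conn_rel G' ?s)"
    unfolding ends' using R2[OF s'] u by auto
  have allc: "(\<forall>x\<in>ends G e'. vcol G (liftA a S') x) \<longleftrightarrow> (\<forall>X\<in>ends G' e'. vcol G' S' X)"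
    unfolding ends' using vL u by auto
  have exc: "(\<exists>x\<in>ends G e'. vcol G (liftA a S') x) \<longleftrightarrow> (\<exists>X\<in>ends G' e'. vcol G' S' X)"
    unfolding ends' using vL u by auto
  have None_iff: "add_edge G (liftA a S') e' = None \<longleftrightarrow> add_edge G' S' e' = None"
    using add_edge_None[OF wf e'(1), of "liftA a S'"] add_edge_None[OF wf' e'', of S'] LS(2) disc allc by simp
  show ?thesis
  proof (cases "add_edge G' S' e'")
    case None then show ?thesis using None_iff by simp
  next
    case (Some Y)
    note YS = add_edge_Some[OF wf' e'' S' Some]
    have Y: "Y \<in> states G'" using YS by simp
    have "add_edge G (liftA a S') e' = Some (liftA a Y)"
      unfolding add_edge_Some_iff[OF wf e'(1) LS(1) liftA_props(1)[OF Y]] LS(2)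
    proof (intro conjI ballI)
      show "fst (liftA a Y) = insert e' ?s" using liftA_props(2)[OF Y] YS by simp
      show "\<not> ((\<exists>p\<in>ends G e'. \<exists>q\<in>ends G e'. (p,q) \<notin> conn_rel G ?s) \<and> (\<forall>x\<in>ends G e'. vcol G (liftA a S') x))"
        using None_iff Some add_edge_None[OF wf e'(1), of "liftA a S'"] LS(2) by simp
      fix x assume x: "x \<in> verts G"
      show "vcol G (liftA a Y) x = (if touch G ?s e' x then \<exists>u\<in>ends G e'. vcol G (liftA a S') u else vcol G (liftA a S') x)"
      proof (cases "x = v")
        case True then show ?thesis using touch_v[OF s' e'] liftA_props(3)[OF Y x] vL[OF x] by simp
      next
        case False
        have xv: "vc x \<in> verts G'" using x by (simp add: verts')
        show ?thesis using liftA_props(3)[OF Y x] vL[OF x] False YS xv touchA[OF s' e' x False] exc by auto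
      qed
    qed
    then show ?thesis using Some by simp
  qed
qed

lemma L3:
  assumes S': "S' \<in> states G'" and e': "e' \<in> edges G" "e' \<noteq> e"
  shows "add_edge G (liftE S') e' = map_option liftE (add_edge G' S' e')"
proof -
  let ?s = "fst S'"
  have s': "?s \<subseteq> edges G - {e}" using st'_fst[OF S'] .
  have e'': "e' \<in> edges G'" using e' by (simp add: edges')
  have LS: "liftE S' \<in> states G" "fst (liftE S') = insert e ?s" using liftE_props[OF S'] by auto
  have vL: "\<And>x. x \<in> verts G \<Longrightarrow> vcol G (liftE S') x = vcol G' S' (vc x)"
    using liftE_props(3)[OF S'] .
  have u: "\<And>u. u \<in> ends G e' \<Longrightarrow> u \<in> verts G" using wf_ends[OF wf e'(1)] by auto
  have disc: "(\<exists>p\<in>ends G e'. \<exists>q\<in>ends G e'. (p,q) \<notin> conn_rel G (insert e ?s)) \<longleftrightarrow>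
              (\<exists>p\<in>ends G' e'. \<exists>q\<in>ends G' e'. (p,q) \<notin> conn_rel G' ?s)"
    unfolding ends' using R1[OF s'] u by auto
  have allc: "(\<forall>x\<in>ends G e'. vcol G (liftE S') x) \<longleftrightarrow> (\<forall>X\<in>ends G' e'. vcol G' S' X)"
    unfolding ends' using vL u by auto
  have exc: "(\<exists>x\<in>ends G e'. vcol G (liftE S') x) \<longleftrightarrow> (\<exists>X\<in>ends G' e'. vcol G' S' X)"
    unfolding ends' using vL u by auto
  have None_iff: "add_edge G (liftE S') e' = None \<longleftrightarrow> add_edge G' S' e' = None"
    using add_edge_None[OF wf e'(1), of "liftE S'"] add_edge_None[OF wf' e'', of S'] LS(2) disc allc by simp
  show ?thesis
  proof (cases "add_edge G' S' e'")
    case None then show ?thesis using None_iff by simp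
  next
    case (Some Y)
    note YS = add_edge_Some[OF wf' e'' S' Some]
    have Y: "Y \<in> states G'" using YS by simp
    have "add_edge G (liftE S') e' = Some (liftE Y)"
      unfolding add_edge_Some_iff[OF wf e'(1) LS(1) liftE_props(1)[OF Y]] LS(2)
    proof (intro conjI ballI)
      show "fst (liftE Y) = insert e' (insert e ?s)" using liftE_props(2)[OF Y] YS by auto
      show "\<not> ((\<exists>p\<in>ends G e'. \<exists>q\<in>ends G e'. (p,q) \<notin> conn_rel G (insert e ?s)) \<and> (\<forall>x\<in>ends G e'. vcol G (liftE S') x))"
        using None_iff Some add_edge_None[OF wf e'(1), of "liftE S'"] LS(2) by simp
      fix x assume x: "x \<in> verts G"
      have xv: "vc x \<in> verts G'" using x by (simp add: verts')
      show "vcol G (liftE Y) x = (if touch G (insert e ?s) e' x then \<exists>u\<in>ends G e'. vcol G (liftE S') u else vcol G (liftE S') x)"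
        using liftE_props(3)[OF Y x] vL[OF x] YS xv touchE[OF s' e'(1) x] exc by auto
    qed
    then show ?thesis using Some by simp
  qed
qed

lemma L4:
  assumes S': "S' \<in> states G'"
  shows "add_edge G (liftA a S') e = map_option liftE (mulW a S')"
proof -
  let ?s = "fst S'"
  let ?b = "a \<or> vcol G' S' (vc v)"
  have s': "?s \<subseteq> edges G - {e}" using st'_fst[OF S'] .
  have LS: "liftA a S' \<in> states G" "fst (liftA a S') = ?s" using liftA_props[OF S'] by auto
  have vL: "\<And>x. x \<in> verts G \<Longrightarrow> vcol G (liftA a S') x = (if x = v then a else vcol G' S' (vc x))"
    using liftA_props(3)[OF S'] .
  have vLw: "vcol G (liftA a S') w = vcol G' S' (vc v)" using vL[OF vG(2)] vw vc_vw by simp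
  have vLv: "vcol G (liftA a S') v = a" using vL[OF vG(1)] by simp
  have nvw: "(v,w) \<notin> conn_rel G ?s" using R3[OF s'] vw by blast
  have None_iff: "add_edge G (liftA a S') e = None \<longleftrightarrow> a \<and> vcol G' S' (vc v)"
    using add_edge_None[OF wf eE, of "liftA a S'"] LS(2) nvw vLv vLw unfolding ends_e by auto
  show ?thesis
  proof (cases "a \<and> vcol G' S' (vc v)")
    case True then show ?thesis using None_iff by (simp add: mulW_def)
  next
    case False
    have Y: "setAt G' (vc v) ?b S' \<in> states G'" using setAt_state[OF S' Wv'] .
    have "add_edge G (liftA a S') e = Some (liftE (setAt G' (vc v) ?b S'))"
      unfolding add_edge_Some_iff[OF wf eE LS(1) liftE_props(1)[OF Y]] LS(2)
    proof (intro conjI ballI)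
      show "fst (liftE (setAt G' (vc v) ?b S')) = insert e ?s" using liftE_props(2)[OF Y] by simp
      show "\<not> ((\<exists>p\<in>ends G e. \<exists>q\<in>ends G e. (p,q) \<notin> conn_rel G ?s) \<and> (\<forall>x\<in>ends G e. vcol G (liftA a S') x))"
        using None_iff False add_edge_None[OF wf eE, of "liftA a S'"] LS(2) by simp
      fix x assume x: "x \<in> verts G"
      have xv: "vc x \<in> verts G'" using x by (simp add: verts')
      have lhs: "vcol G (liftE (setAt G' (vc v) ?b S')) x = (if (vc x, vc v) \<in> conn_rel G' ?s then ?b else vcol G' S' (vc x))"
        using liftE_props(3)[OF Y x] vcol_setAt[OF xv Wv'] by simp
      have ex: "(\<exists>u\<in>ends G e. vcol G (liftA a S') u) = ?b" using vLv vLw ends_e by auto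
      show "vcol G (liftE (setAt G' (vc v) ?b S')) x =
        (if touch G ?s e x then \<exists>u\<in>ends G e. vcol G (liftA a S') u else vcol G (liftA a S') x)"
      proof (cases "x = v")
        case True
        have "touch G ?s e v" using touch_end[OF _ vG(1)] ends_e by simp
        then show ?thesis using True lhs ex conn_refl[OF Wv'] by simp
      next
        case False
        have "touch G ?s e x \<longleftrightarrow> (x,w) \<in> conn_rel G ?s"
          unfolding touch_def ends_e using R3'[OF s'] False by auto
        also have "\<dots> \<longleftrightarrow> (vc x, vc v) \<in> conn_rel G' ?s" using R2[OF s' x False vG(2)] vw vc_vw by simp
        finally show ?thesis using lhs ex vL[OF x] False by simp
      qed
    qed
    then show ?thesis using False by (simp add: mulW_def)
  qed
qed

end

context pend
begin

definition rr :: "('e \<Rightarrow> nat) \<Rightarrow> 'e \<Rightarrow> nat" where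
  "rr r' f = (if f = e then 0 else Suc (r' f))"

lemma nb1: "s' \<subseteq> edges G - {e} \<Longrightarrow> e' \<noteq> e \<Longrightarrow> nbefore (rr r') s' e' = nbefore r' s' e'"
  unfolding nbefore_def rr_def by (rule arg_cong[where f = card]) auto

lemma nb2: "nbefore (rr r') s' e = 0"
  unfolding nbefore_def rr_def by simp

lemma nb3:
  assumes s': "s' \<subseteq> edges G - {e}" and e': "e' \<noteq> e"
  shows "nbefore (rr r') (insert e s') e' = Suc (nbefore r' s' e')"
proof -
  have fin: "finite s'" using s' wf_fin[OF wf] finite_subset by auto
  have "{f \<in> insert e s'. rr r' f < rr r' e'} = insert e {f \<in> s'. r' f < r' e'}"
    using s' e' unfolding rr_def by auto
  moreover have "e \<notin> {f \<in> s'. r' f < r' e'}" using s' by auto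
  ultimately show ?thesis unfolding nbefore_def using fin by simp
qed

lemma sum_split:
  fixes g :: "('v,'e) estate \<Rightarrow> int"
  shows "(\<Sum>S\<in>states G. g S) = (\<Sum>S'\<in>states G'. g (liftA True S')) + (\<Sum>S'\<in>states G'. g (liftA False S')) + (\<Sum>S'\<in>states G'. g (liftE S'))"
proof -
  have fin: "finite (states G')" using finite_states[OF wf'] .
  have i1: "inj_on (liftA b) (states G')" for b using liftA_inj by (auto simp: inj_on_def)
  have i2: "inj_on liftE (states G')" using liftE_inj by (auto simp: inj_on_def)
  have d1: "liftA True ` states G' \<inter> liftA False ` states G' = {}" using liftA_inj by auto
  have d2: "(liftA True ` states G' \<union> liftA False ` states G') \<inter> liftE ` states G' = {}"
    using liftA_ne_liftE by blast
  have "(\<Sum>S\<in>states G. g S) = (\<Sum>S\<in>liftA True ` states G' \<union> liftA False ` states G'. g S) + (\<Sum>S\<in>liftE ` states G'. g S)"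
    unfolding states_split by (rule sum.union_disjoint) (use fin d2 in auto)
  also have "(\<Sum>S\<in>liftA True ` states G' \<union> liftA False ` states G'. g S) = (\<Sum>S\<in>liftA True ` states G'. g S) + (\<Sum>S\<in>liftA False ` states G'. g S)"
    by (rule sum.union_disjoint) (use fin d1 in auto)
  finally show ?thesis using sum.reindex[OF i1, of g] sum.reindex[OF i2, of g] by (simp add: comp_def)
qed

definition FF :: "('e \<Rightarrow> nat) \<Rightarrow> ('v,'e) chain \<Rightarrow> ('v,'e) estate \<Rightarrow> ('v,'e) estate \<Rightarrow> int" where
  "FF r' \<phi> T S = (\<Sum>e'\<in>edges G - fst S. (case add_edge G S e' of None \<Rightarrow> 0
        | Some X \<Rightarrow> if X = T then (-1) ^ nbefore (rr r') (fst S) e' * \<phi> S else 0))"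

lemma diff_FF: "diff G (rr r') \<phi> T = (\<Sum>S\<in>states G. FF r' \<phi> T S)"
  unfolding diff_def FF_def ..

lemma FA:
  assumes S': "S' \<in> states G'"
  shows "FF r' \<phi> T (liftA a S') = (case mulW a S' of None \<Rightarrow> 0 | Some Y \<Rightarrow> if liftE Y = T then \<phi> (liftA a S') else 0)
    + (\<Sum>e'\<in>edges G' - fst S'. (case add_edge G' S' e' of None \<Rightarrow> 0
        | Some X \<Rightarrow> if liftA a X = T then (-1) ^ nbefore r' (fst S') e' * \<phi> (liftA a S') else 0))"
proof -
  have s': "fst S' \<subseteq> edges G - {e}" using st'_fst[OF S'] .
  have E: "edges G - fst (liftA a S') = insert e (edges G' - fst S')"
    using liftA_props(2)[OF S'] s' eE by (auto simp: edges')
  have ne: "e \<notin> edges G' - fst S'" by (simp add: edges')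
  have fin: "finite (edges G' - fst S')" using wf_fin[OF wf] by (simp add: edges')
  show ?thesis unfolding FF_def E sum.insert[OF fin ne]
  proof (intro arg_cong2[where f = "(+)"] sum.cong refl)
    show "(case add_edge G (liftA a S') e of None \<Rightarrow> 0 | Some X \<Rightarrow> if X = T then (- 1) ^ nbefore (rr r') (fst (liftA a S')) e * \<phi> (liftA a S') else 0) =
      (case mulW a S' of None \<Rightarrow> 0 | Some Y \<Rightarrow> if liftE Y = T then \<phi> (liftA a S') else 0)"
      unfolding L4[OF S'] nb2 by (cases "mulW a S'") auto
  next
    fix e' assume e': "e' \<in> edges G' - fst S'"
    then have e'': "e' \<in> edges G" "e' \<noteq> e" by (auto simp: edges')
    show "(case add_edge G (liftA a S') e' of None \<Rightarrow> 0 | Some X \<Rightarrow> if X = T then (- 1) ^ nbefore (rr r') (fst (liftA a S')) e' * \<phi> (liftA a S') else 0) =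
      (case add_edge G' S' e' of None \<Rightarrow> 0 | Some X \<Rightarrow> if liftA a X = T then (- 1) ^ nbefore r' (fst S') e' * \<phi> (liftA a S') else 0)"
      unfolding L1[OF S' e''] liftA_props(2)[OF S'] nb1[OF s' e''(2)] by (cases "add_edge G' S' e'") auto
  qed
qed

lemma FE:
  assumes S': "S' \<in> states G'"
  shows "FF r' \<phi> T (liftE S') = (\<Sum>e'\<in>edges G' - fst S'. (case add_edge G' S' e' of None \<Rightarrow> 0
        | Some X \<Rightarrow> if liftE X = T then - ((-1) ^ nbefore r' (fst S') e' * \<phi> (liftE S')) else 0))"
proof -
  have s': "fst S' \<subseteq> edges G - {e}" using st'_fst[OF S'] .
  have E: "edges G - fst (liftE S') = edges G' - fst S'"
    using liftE_props(2)[OF S'] by (auto simp: edges')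
  show ?thesis unfolding FF_def E
  proof (intro sum.cong refl)
    fix e' assume e': "e' \<in> edges G' - fst S'"
    then have e'': "e' \<in> edges G" "e' \<noteq> e" by (auto simp: edges')
    show "(case add_edge G (liftE S') e' of None \<Rightarrow> 0 | Some X \<Rightarrow> if X = T then (- 1) ^ nbefore (rr r') (fst (liftE S')) e' * \<phi> (liftE S') else 0) =
      (case add_edge G' S' e' of None \<Rightarrow> 0 | Some X \<Rightarrow> if liftE X = T then - ((- 1) ^ nbefore r' (fst S') e' * \<phi> (liftE S')) else 0)"
      unfolding L3[OF S' e''] liftE_props(2)[OF S'] nb3[OF s' e''(2)] by (cases "add_edge G' S' e'") auto
  qed
qed

lemma mulW_state: assumes "S' \<in> states G'" "mulW a S' = Some Y" shows "Y \<in> states G'"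
  using assms setAt_state[OF assms(1) Wv'] unfolding mulW_def by (auto split: if_splits)

lemma E1:
  assumes T': "T' \<in> states G'"
  shows "diff G (rr r') \<phi> (liftA b T') = diff G' r' (\<lambda>S'. \<phi> (liftA b S')) T'"
proof -
  have mz: "(case mulW a S' of None \<Rightarrow> 0 | Some Y \<Rightarrow> if liftE Y = liftA b T' then \<phi> (liftA a S') else 0) = 0"
    if S': "S' \<in> states G'" for a S'
  proof (cases "mulW a S'")
    case (Some Y)
    then have "liftE Y \<noteq> liftA b T'" using liftA_ne_liftE[OF T' mulW_state[OF S' Some]] by metis
    then show ?thesis using Some by simp
  qed simp
  have t: "(case add_edge G' S' e' of None \<Rightarrow> 0 | Some X \<Rightarrow> if liftA a X = liftA b T' then (-1) ^ nbefore r' (fst S') e' * \<phi> (liftA a S') else 0)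
     = (if a = b then (case add_edge G' S' e' of None \<Rightarrow> 0 | Some X \<Rightarrow> if X = T' then (-1) ^ nbefore r' (fst S') e' * \<phi> (liftA b S') else 0) else 0)"
    if S': "S' \<in> states G'" and e': "e' \<in> edges G' - fst S'" for a S' e'
  proof (cases "add_edge G' S' e'")
    case None then show ?thesis by simp
  next
    case (Some X)
    then have "X \<in> states G'" using add_edge_Some[OF wf' _ S'] e' by blast
    then show ?thesis using Some liftA_inj[OF _ T'] by auto
  qed
  have tE: "(case add_edge G' S' e' of None \<Rightarrow> 0 | Some X \<Rightarrow> if liftE X = liftA b T' then - ((-1) ^ nbefore r' (fst S') e' * \<phi> (liftE S')) else 0) = 0"
    if S': "S' \<in> states G'" and e': "e' \<in> edges G' - fst S'" for S' e'
  proof (cases "add_edge G' S' e'")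
    case None then show ?thesis by simp
  next
    case (Some X)
    then have "X \<in> states G'" using add_edge_Some[OF wf' _ S'] e' by blast
    then have "liftE X \<noteq> liftA b T'" using liftA_ne_liftE[OF T'] by metis
    then show ?thesis using Some by simp
  qed
  have FAb: "FF r' \<phi> (liftA b T') (liftA a S') = (if a = b then (\<Sum>e'\<in>edges G' - fst S'. (case add_edge G' S' e' of None \<Rightarrow> 0
        | Some X \<Rightarrow> if X = T' then (-1) ^ nbefore r' (fst S') e' * \<phi> (liftA b S') else 0)) else 0)"
    if S': "S' \<in> states G'" for a S'
  proof -
    have "FF r' \<phi> (liftA b T') (liftA a S') = (\<Sum>e'\<in>edges G' - fst S'. (if a = b then (case add_edge G' S' e' of None \<Rightarrow> 0
        | Some X \<Rightarrow> if X = T' then (-1) ^ nbefore r' (fst S') e' * \<phi> (liftA b S') else 0) else 0))"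
      unfolding FA[OF S'] mz[OF S'] add_0 by (intro sum.cong refl t[OF S'])
    then show ?thesis by (cases "a = b") simp_all
  qed
  have SA: "(\<Sum>S'\<in>states G'. FF r' \<phi> (liftA b T') (liftA a S')) = (if a = b then diff G' r' (\<lambda>S'. \<phi> (liftA b S')) T' else 0)" for a
  proof -
    have "(\<Sum>S'\<in>states G'. FF r' \<phi> (liftA b T') (liftA a S')) = (\<Sum>S'\<in>states G'. (if a = b then (\<Sum>e'\<in>edges G' - fst S'. (case add_edge G' S' e' of None \<Rightarrow> 0
        | Some X \<Rightarrow> if X = T' then (-1) ^ nbefore r' (fst S') e' * \<phi> (liftA b S') else 0)) else 0))"
      using FAb by (intro sum.cong refl) simp
    then show ?thesis unfolding diff_def by (cases "a = b") simp_all
  qed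
  have split: "diff G (rr r') \<phi> (liftA b T') =
      (\<Sum>S'\<in>states G'. FF r' \<phi> (liftA b T') (liftA True S')) + (\<Sum>S'\<in>states G'. FF r' \<phi> (liftA b T') (liftA False S'))
      + (\<Sum>S'\<in>states G'. FF r' \<phi> (liftA b T') (liftE S'))"
    unfolding diff_FF by (rule sum_split)
  moreover have "(\<Sum>S'\<in>states G'. FF r' \<phi> (liftA b T') (liftE S')) = 0"
  proof (intro sum.neutral ballI)
    fix S' assume S': "S' \<in> states G'"
    show "FF r' \<phi> (liftA b T') (liftE S') = 0" unfolding FE[OF S'] by (intro sum.neutral ballI tE[OF S'])
  qed
  ultimately show ?thesis using SA[of True] SA[of False] by (cases b) simp_all
qed

lemma E2:
  assumes T': "T' \<in> states G'"
  shows "diff G (rr r') \<phi> (liftE T') = \<phi> (liftA False T')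
     + (if vcol G' T' (vc v) then \<phi> (liftA True (setAt G' (vc v) False T')) else 0)
     - diff G' r' (\<lambda>S'. \<phi> (liftE S')) T'"
proof -
  let ?W = "vc v"
  have Fa: "FF r' \<phi> (liftE T') (liftA a S') = (case mulW a S' of None \<Rightarrow> 0 | Some Y \<Rightarrow> if Y = T' then \<phi> (liftA a S') else 0)"
    if S': "S' \<in> states G'" for a S'
  proof -
    have z: "(case add_edge G' S' e' of None \<Rightarrow> 0 | Some X \<Rightarrow> if liftA a X = liftE T' then (-1) ^ nbefore r' (fst S') e' * \<phi> (liftA a S') else 0) = 0"
      if e': "e' \<in> edges G' - fst S'" for e'
    proof (cases "add_edge G' S' e'")
      case (Some X)
      then have "X \<in> states G'" using add_edge_Some[OF wf' _ S'] e' by blast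
      then have "liftA a X \<noteq> liftE T'" using liftA_ne_liftE[OF _ T'] by metis
      then show ?thesis using Some by simp
    qed simp
    have m: "(case mulW a S' of None \<Rightarrow> 0 | Some Y \<Rightarrow> if liftE Y = liftE T' then \<phi> (liftA a S') else 0)
       = (case mulW a S' of None \<Rightarrow> 0 | Some Y \<Rightarrow> if Y = T' then \<phi> (liftA a S') else 0)"
    proof (cases "mulW a S'")
      case (Some Y)
      then show ?thesis using liftE_inj[OF mulW_state[OF S' Some] T'] by simp
    qed simp
    show ?thesis unfolding FA[OF S'] m using z by simp
  qed
  have Fe: "FF r' \<phi> (liftE T') (liftE S') = - (\<Sum>e'\<in>edges G' - fst S'. (case add_edge G' S' e' of None \<Rightarrow> 0
        | Some X \<Rightarrow> if X = T' then (-1) ^ nbefore r' (fst S') e' * \<phi> (liftE S') else 0))"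
    if S': "S' \<in> states G'" for S'
  proof -
    have "FF r' \<phi> (liftE T') (liftE S') = (\<Sum>e'\<in>edges G' - fst S'. - (case add_edge G' S' e' of None \<Rightarrow> 0
        | Some X \<Rightarrow> if X = T' then (-1) ^ nbefore r' (fst S') e' * \<phi> (liftE S') else 0))"
      unfolding FE[OF S']
    proof (intro sum.cong refl)
      fix e' assume e': "e' \<in> edges G' - fst S'"
      show "(case add_edge G' S' e' of None \<Rightarrow> 0 | Some X \<Rightarrow> if liftE X = liftE T' then - ((-1) ^ nbefore r' (fst S') e' * \<phi> (liftE S')) else 0) =
        - (case add_edge G' S' e' of None \<Rightarrow> 0 | Some X \<Rightarrow> if X = T' then (-1) ^ nbefore r' (fst S') e' * \<phi> (liftE S') else 0)"
      proof (cases "add_edge G' S' e'")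
        case (Some X)
        then have "X \<in> states G'" using add_edge_Some[OF wf' _ S'] e' by blast
        then show ?thesis using Some liftE_inj[OF _ T'] by simp
      qed simp
    qed
    then show ?thesis by (simp add: sum_negf)
  qed
  have mF: "mulW False S' = Some S'" for S'
    unfolding mulW_def using setAt_self[of G' S' ?W] by simp
  have sF: "(\<Sum>S'\<in>states G'. FF r' \<phi> (liftE T') (liftA False S')) = \<phi> (liftA False T')"
  proof -
    have "(\<Sum>S'\<in>states G'. FF r' \<phi> (liftE T') (liftA False S')) = (\<Sum>S'\<in>states G'. if S' = T' then \<phi> (liftA False S') else 0)"
      using Fa mF by (intro sum.cong refl) simp
    also have "\<dots> = \<phi> (liftA False T')" using T' finite_states[OF wf'] by (simp add: sum.delta)
    finally show ?thesis .
  qed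
  let ?U = "setAt G' ?W False T'"
  have U: "?U \<in> states G'" using setAt_state[OF T' Wv'] .
  have mT: "(case mulW True S' of None \<Rightarrow> 0 | Some Y \<Rightarrow> if Y = T' then \<phi> (liftA True S') else 0)
     = (if vcol G' T' ?W then (if S' = ?U then \<phi> (liftA True S') else 0) else 0)" if S': "S' \<in> states G'" for S'
  proof (cases "vcol G' S' ?W")
    case True
    have "S' \<noteq> ?U \<or> \<not> vcol G' T' ?W" using True colAt_setAt[OF Wv', of False T'] by auto
    then show ?thesis using True by (auto simp: mulW_def)
  next
    case False
    have "setAt G' ?W True S' = T' \<longleftrightarrow> S' = ?U \<and> vcol G' T' ?W"
    proof
      assume eq: "setAt G' ?W True S' = T'"
      have "vcol G' T' ?W" using colAt_setAt[OF Wv', of True S'] eq by simp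
      moreover have "S' = ?U" using eq setAt_setAt[of G' ?W False True S'] setAt_self[of G' S' ?W False] False by simp
      ultimately show "S' = ?U \<and> vcol G' T' ?W" by simp
    next
      assume "S' = ?U \<and> vcol G' T' ?W"
      then show "setAt G' ?W True S' = T'" using setAt_setAt[of G' ?W True False T'] setAt_self[of G' T' ?W True] by simp
    qed
    then show ?thesis using False by (auto simp: mulW_def)
  qed
  have sT: "(\<Sum>S'\<in>states G'. FF r' \<phi> (liftE T') (liftA True S')) = (if vcol G' T' ?W then \<phi> (liftA True ?U) else 0)"
  proof -
    have "(\<Sum>S'\<in>states G'. FF r' \<phi> (liftE T') (liftA True S')) = (\<Sum>S'\<in>states G'. if vcol G' T' ?W then (if S' = ?U then \<phi> (liftA True S') else 0) else 0)"
      using Fa mT by (intro sum.cong refl) simp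
    also have "\<dots> = (if vcol G' T' ?W then \<phi> (liftA True ?U) else 0)"
      using U finite_states[OF wf'] by (simp add: sum.delta)
    finally show ?thesis .
  qed
  have sE: "(\<Sum>S'\<in>states G'. FF r' \<phi> (liftE T') (liftE S')) = - diff G' r' (\<lambda>S'. \<phi> (liftE S')) T'"
    unfolding diff_def using Fe by (simp add: sum_negf)
  show ?thesis unfolding diff_FF sum_split sT sF sE by simp
qed

end

lemma case_opt_eq: "(case oo of None \<Rightarrow> 0 | Some X \<Rightarrow> if X = T then c else (0::int)) = (if oo = Some T then c else 0)"
  by (cases oo) auto

lemma diff_alt: "diff H r \<phi> T = (\<Sum>S\<in>states H. \<Sum>e'\<in>edges H - fst S. if add_edge H S e' = Some T then (-1) ^ nbefore r (fst S) e' * \<phi> S else 0)"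
  unfolding diff_def case_opt_eq ..

lemma MU:
  assumes wf: "wf_graph H" and x0: "x0 \<in> verts H" and T: "T \<in> states H"
  shows "diff H r (\<lambda>S. if vcol H S x0 then - \<psi> (setAt H x0 False S) else 0) T =
    (if vcol H T x0 then - diff H r \<psi> (setAt H x0 False T) else 0)"
proof -
  let ?U = "setAt H x0 False"
  let ?V = "\<lambda>S. vcol H S x0"
  let ?A = "{S \<in> states H. ?V S}"
  let ?B = "{S \<in> states H. \<not> ?V S}"
  have fin: "finite (states H)" using finite_states[OF wf] .
  define g where "g S = (\<Sum>e'\<in>edges H - fst S. if add_edge H S e' = Some T then (-1) ^ nbefore r (fst S) e' * \<psi> (?U S) else 0)" for S
  have L: "diff H r (\<lambda>S. if ?V S then - \<psi> (?U S) else 0) T = - (\<Sum>S\<in>?A. g S)"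
  proof -
    have "diff H r (\<lambda>S. if ?V S then - \<psi> (?U S) else 0) T = (\<Sum>S\<in>states H. if ?V S then - g S else 0)"
      unfolding diff_alt g_def
    proof (intro sum.cong refl)
      fix S assume "S \<in> states H"
      have n: "\<And>c a b. (if c then a * - b else (0::int)) = - (if c then a * b else 0)" by simp
      show "(\<Sum>e'\<in>edges H - fst S. if add_edge H S e' = Some T then (- 1) ^ nbefore r (fst S) e' * (if ?V S then - \<psi> (?U S) else 0) else 0) =
        (if ?V S then - (\<Sum>e'\<in>edges H - fst S. if add_edge H S e' = Some T then (- 1) ^ nbefore r (fst S) e' * \<psi> (?U S) else 0) else 0)"
        by (cases "?V S") (simp_all add: n sum_negf sum.neutral)
    qed
    also have "\<dots> = (\<Sum>S\<in>?A. - g S)" using sum.inter_filter[OF fin, of "\<lambda>S. - g S" ?V] by simp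
    finally show ?thesis by (simp add: sum_negf)
  qed
  show ?thesis
  proof (cases "?V T")
    case False
    have "g S = 0" if S: "S \<in> ?A" for S
      unfolding g_def
    proof (intro sum.neutral ballI)
      fix e' assume e': "e' \<in> edges H - fst S"
      have "add_edge H S e' \<noteq> Some T" using Ma[OF wf x0 _ _ _, of S e' T] S e' False by auto
      then show "(if add_edge H S e' = Some T then (-1) ^ nbefore r (fst S) e' * \<psi> (?U S) else 0) = 0" by simp
    qed
    then show ?thesis using L False by simp
  next
    case True
    let ?UT = "?U T"
    define h where "h R = (\<Sum>e'\<in>edges H - fst R. if add_edge H R e' = Some ?UT then (-1) ^ nbefore r (fst R) e' * \<psi> R else 0)" for R
    have nUT: "\<not> ?V ?UT" using colAt_setAt[OF x0] by simp
    have hA: "h R = 0" if R: "R \<in> ?A" for R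
      unfolding h_def
    proof (intro sum.neutral ballI)
      fix e' assume e': "e' \<in> edges H - fst R"
      have "add_edge H R e' \<noteq> Some ?UT" using Ma[OF wf x0 _ _ _, of R e' ?UT] R e' nUT by auto
      then show "(if add_edge H R e' = Some ?UT then (-1) ^ nbefore r (fst R) e' * \<psi> R else 0) = 0" by simp
    qed
    have "diff H r \<psi> ?UT = (\<Sum>R\<in>states H. h R)" unfolding diff_alt h_def ..
    also have "\<dots> = (\<Sum>R\<in>states H. if \<not> ?V R then h R else 0)" using hA by (intro sum.cong refl) auto
    also have "\<dots> = (\<Sum>R\<in>?B. h R)" using sum.inter_filter[OF fin, of h "\<lambda>R. \<not> ?V R"] by simp
    also have "\<dots> = (\<Sum>S\<in>?A. g S)"
    proof (rule sym, rule sum.reindex_bij_witness[where i = "setAt H x0 True" and j = ?U])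
      fix S assume S: "S \<in> ?A"
      show "setAt H x0 True (?U S) = S" using setAt_setAt[of H x0 True False S] setAt_self[of H S x0 True] S by simp
      show "?U S \<in> ?B" using S setAt_state[OF _ x0] colAt_setAt[OF x0] by auto
      have eq: "add_edge H (?U S) e' = Some ?UT \<longleftrightarrow> add_edge H S e' = Some T" if e': "e' \<in> edges H - fst S" for e'
      proof
        assume "add_edge H (?U S) e' = Some ?UT"
        then have "add_edge H S e' = Some (setAt H x0 True ?UT)" using Mb[OF wf x0 _ _ _ _ nUT] S e' by auto
        then show "add_edge H S e' = Some T" using setAt_setAt[of H x0 True False T] setAt_self[of H T x0 True] True by simp
      next
        assume "add_edge H S e' = Some T"
        then show "add_edge H (?U S) e' = Some ?UT" using Ma[OF wf x0] S e' by auto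
      qed
      show "h (?U S) = g S" unfolding h_def g_def fst_setAt using eq by (intro sum.cong refl) auto
    next
      fix R assume R: "R \<in> ?B"
      show "?U (setAt H x0 True R) = R" using setAt_setAt[of H x0 False True R] setAt_self[of H R x0 False] R by simp
      show "setAt H x0 True R \<in> ?A" using R setAt_state[OF _ x0] colAt_setAt[OF x0] by auto
    qed
    finally show ?thesis using L True by simp
  qed
qed

lemma diff_sub: "diff G r (\<lambda>S. x S - y S) = (\<lambda>T. diff G r x T - diff G r y T)"
  using diff_add[of G r x "\<lambda>S. - y S"] diff_neg[of G r y] by simp

lemma chains_D: "\<phi> \<in> chains G i j \<Longrightarrow> \<phi> S \<noteq> 0 \<Longrightarrow> S \<in> states G \<and> ideg S = i \<and> jdeg G S = j"
  unfolding chains_def by blast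

lemma chains_supp: "\<phi> \<in> chains G i j \<Longrightarrow> S \<notin> states G \<Longrightarrow> \<phi> S = 0"
  using chains_D by blast

lemma diff_zero_on: "(\<And>S. S \<in> states G \<Longrightarrow> x S = 0) \<Longrightarrow> diff G r x = (\<lambda>_. 0)"
  using diff_cong[of G x "\<lambda>_. 0" r] diff_zero[of G r] by simp

context pend
begin

definition Phi :: "('v,'e) chain \<Rightarrow> ('v set,'e) chain" where
  "Phi \<phi> S' = (if S' \<in> states G' then \<phi> (liftA True S') else 0)"

definition kmap :: "('v set,'e) chain \<Rightarrow> ('v,'e) chain" where
  "kmap \<psi> S = (if S \<in> states G \<and> e \<notin> fst S then (if vcol G S v then \<psi> (down S)
      else if vcol G' (down S) (vc v) then - \<psi> (setAt G' (vc v) False (down S)) else 0) else 0)"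

lemma eA: "S' \<in> states G' \<Longrightarrow> e \<notin> fst (liftA a S')"
  using liftA_props(2) st'_fst by fastforce

lemma k1: "T' \<in> states G' \<Longrightarrow> kmap \<psi> (liftA True T') = \<psi> T'"
  unfolding kmap_def using liftA_props(1) eA liftA_vcol_v down_liftA by simp
lemma k0: "T' \<in> states G' \<Longrightarrow> kmap \<psi> (liftA False T') = (if vcol G' T' (vc v) then - \<psi> (setAt G' (vc v) False T') else 0)"
  unfolding kmap_def using liftA_props(1) eA liftA_vcol_v down_liftA by simp
lemma kE: "T' \<in> states G' \<Longrightarrow> kmap \<psi> (liftE T') = 0"
  unfolding kmap_def using liftE_props(2) by simp
lemma k_off: "S \<notin> states G \<Longrightarrow> kmap \<psi> S = 0"
  unfolding kmap_def by simp

lemma state_cases: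
  assumes "T \<in> states G"
  obtains T' where "T' \<in> states G'" "T = liftA True T'" | T' where "T' \<in> states G'" "T = liftA False T'"
    | T' where "T' \<in> states G'" "T = liftE T'"
  using assms states_split by blast

lemma F1: "Phi (diff G (rr r') \<phi>) = diff G' r' (Phi \<phi>)"
proof (rule ext)
  fix S'
  show "Phi (diff G (rr r') \<phi>) S' = diff G' r' (Phi \<phi>) S'"
  proof (cases "S' \<in> states G'")
    case True
    have "diff G' r' (Phi \<phi>) = diff G' r' (\<lambda>S'. \<phi> (liftA True S'))"
      by (rule diff_cong) (simp add: Phi_def)
    then show ?thesis using E1[OF True] True by (simp add: Phi_def)
  next
    case False
    then show ?thesis using diff_off_states[OF wf' False] by (simp add: Phi_def)
  qed
qed

lemma F2: "diff G (rr r') (kmap \<psi>) = kmap (diff G' r' \<psi>)"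
proof (rule ext)
  fix T
  show "diff G (rr r') (kmap \<psi>) T = kmap (diff G' r' \<psi>) T"
  proof (cases "T \<in> states G")
    case False
    then show ?thesis using diff_off_states[OF wf False] k_off by simp
  next
    case True
    then show ?thesis
    proof (cases rule: state_cases)
      case (1 T')
      have "diff G' r' (\<lambda>S'. kmap \<psi> (liftA True S')) = diff G' r' \<psi>"
        by (rule diff_cong) (simp add: k1)
      then show ?thesis using E1[OF 1(1)] k1[OF 1(1)] 1(2) by simp
    next
      case (2 T')
      have "diff G' r' (\<lambda>S'. kmap \<psi> (liftA False S')) =
        diff G' r' (\<lambda>S'. if vcol G' S' (vc v) then - \<psi> (setAt G' (vc v) False S') else 0)"
        by (rule diff_cong) (simp add: k0)
      then show ?thesis using E1[OF 2(1)] k0[OF 2(1)] 2(2) MU[OF wf' Wv' 2(1)] by simp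
    next
      case (3 T')
      have "diff G' r' (\<lambda>S'. kmap \<psi> (liftE S')) = (\<lambda>_. 0)"
        by (rule diff_zero_on) (simp add: kE)
      moreover have "kmap \<psi> (liftA True (setAt G' (vc v) False T')) = \<psi> (setAt G' (vc v) False T')"
        using k1 setAt_state[OF 3(1) Wv'] by simp
      ultimately show ?thesis using E2[OF 3(1)] k0[OF 3(1)] kE[OF 3(1)] 3(2) by simp
    qed
  qed
qed

lemma F3: "\<psi> \<in> chains G' i j \<Longrightarrow> Phi (kmap \<psi>) = \<psi>"
  unfolding Phi_def using k1 chains_supp by (auto simp: fun_eq_iff)

lemma Phi_chains:
  assumes "\<phi> \<in> chains G i j" shows "Phi \<phi> \<in> chains G' i (j - 1)"
  unfolding chains_def
proof (intro CollectI allI impI)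
  fix S' assume nz: "Phi \<phi> S' \<noteq> 0"
  then have S': "S' \<in> states G'" and "\<phi> (liftA True S') \<noteq> 0" by (auto simp: Phi_def split: if_splits)
  then have "ideg (liftA True S') = i" "jdeg G (liftA True S') = j" using chains_D[OF assms] by auto
  then show "S' \<in> states G' \<and> ideg S' = i \<and> jdeg G' S' = j - 1"
    using S' ideg_liftA[OF S'] jdeg_liftA[OF S'] by simp
qed

lemma kmap_chains:
  assumes \<psi>: "\<psi> \<in> chains G' i (j - 1)" shows "kmap \<psi> \<in> chains G i j"
  unfolding chains_def
proof (intro CollectI allI impI)
  fix S assume nz: "kmap \<psi> S \<noteq> 0"
  then have S: "S \<in> states G" and eS: "e \<notin> fst S" by (auto simp: kmap_def split: if_splits)
  let ?D = "down S"
  have D: "?D \<in> states G'" using down_props(1)[OF S] .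
  have SD: "S = liftA (vcol G S v) ?D" using liftA_down[OF S eS] by simp
  show "S \<in> states G \<and> ideg S = i \<and> jdeg G S = j"
  proof (cases "vcol G S v")
    case True
    then have "\<psi> ?D \<noteq> 0" using nz S eS by (simp add: kmap_def)
    then have "ideg ?D = i" "jdeg G' ?D = j - 1" using chains_D[OF \<psi>] by auto
    then have "ideg (liftA True ?D) = i" "jdeg G (liftA True ?D) = j"
      using ideg_liftA[OF D] jdeg_liftA[OF D] by simp_all
    moreover have SD': "S = liftA True ?D" using SD True by simp
    ultimately have "ideg S = i" "jdeg G S = j" by (simp_all only: SD'[symmetric])
    then show ?thesis using S by simp
  next
    case False
    let ?U = "setAt G' (vc v) False ?D"
    have c: "vcol G' ?D (vc v)" and "\<psi> ?U \<noteq> 0" using nz S eS False by (auto simp: kmap_def split: if_splits)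
    then have "ideg ?U = i" "jdeg G' ?U = j - 1" using chains_D[OF \<psi>] by auto
    moreover have "jdeg G' ?D = jdeg G' ?U + 1" using jdeg_setAt[OF D Wv' c] wf_fin[OF wf'] by simp
    moreover have "ideg ?U = ideg ?D" by (simp add: ideg_def)
    ultimately have "ideg (liftA False ?D) = i" "jdeg G (liftA False ?D) = j"
      using ideg_liftA[OF D] jdeg_liftA[OF D] by simp_all
    moreover have SD': "S = liftA False ?D" using SD False by simp
    ultimately have "ideg S = i" "jdeg G S = j" by (simp_all only: SD'[symmetric])
    then show ?thesis using S by simp
  qed
qed

lemma F4:
  assumes \<phi>: "\<phi> \<in> chains G i j" and d: "diff G (rr r') \<phi> = (\<lambda>_. 0)"
  shows "\<exists>\<chi> \<in> chains G (i - 1) j. (\<lambda>S. \<phi> S - kmap (Phi \<phi>) S) = diff G (rr r') \<chi>"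
proof -
  define \<theta> where "\<theta> = (\<lambda>S. \<phi> S - kmap (Phi \<phi>) S)"
  define \<chi> where "\<chi> S = (if S \<in> states G \<and> e \<notin> fst S \<and> \<not> vcol G S v then \<theta> (liftE (down S)) else 0)" for S
  have th: "\<theta> \<in> chains G i j"
    unfolding \<theta>_def using addsub_diff[OF addsub_chains \<phi> kmap_chains[OF Phi_chains[OF \<phi>]]] by simp
  have c1: "\<chi> (liftA True T') = 0" if "T' \<in> states G'" for T'
    using that liftA_vcol_v by (simp add: \<chi>_def)
  have c0: "\<chi> (liftA False T') = \<theta> (liftE T')" if "T' \<in> states G'" for T'
    using that liftA_props(1) eA liftA_vcol_v down_liftA by (simp add: \<chi>_def)
  have cE: "\<chi> (liftE T') = 0" if "T' \<in> states G'" for T'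
    using that liftE_props(2) by (simp add: \<chi>_def)
  have t1: "\<theta> (liftA True T') = 0" if T': "T' \<in> states G'" for T'
    using k1[OF T'] T' by (simp add: \<theta>_def Phi_def)
  have dth: "diff G (rr r') \<theta> = (\<lambda>_. 0)"
    unfolding \<theta>_def diff_sub F2 F1[symmetric] d by (simp add: Phi_def kmap_def diff_zero fun_eq_iff)
  have "\<theta> = diff G (rr r') \<chi>"
  proof (rule ext)
    fix T
    show "\<theta> T = diff G (rr r') \<chi> T"
    proof (cases "T \<in> states G")
      case False
      then show ?thesis using diff_off_states[OF wf False] chains_supp[OF th] by simp
    next
      case True
      then show ?thesis
      proof (cases rule: state_cases)
        case (1 T')
        have "diff G' r' (\<lambda>S'. \<chi> (liftA True S')) = (\<lambda>_. 0)" by (rule diff_zero_on) (simp add: c1)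
        then show ?thesis using E1[OF 1(1)] 1(2) t1[OF 1(1)] by simp
      next
        case (2 T')
        have "diff G' r' (\<lambda>S'. \<chi> (liftA False S')) = diff G' r' (\<lambda>S'. \<theta> (liftE S'))"
          by (rule diff_cong) (simp add: c0)
        moreover have "\<theta> (liftA False T') = diff G' r' (\<lambda>S'. \<theta> (liftE S')) T'"
        proof -
          have z: "diff G (rr r') \<theta> (liftE T') = 0" using dth by simp
          have u: "\<theta> (liftA True (setAt G' (vc v) False T')) = 0" using t1[OF setAt_state[OF 2(1) Wv']] .
          show ?thesis using E2[OF 2(1), of r' \<theta>] z u by (cases "vcol G' T' (vc v)") simp_all
        qed
        ultimately show ?thesis using E1[OF 2(1)] 2(2) by simp
      next
        case (3 T')
        have "diff G' r' (\<lambda>S'. \<chi> (liftE S')) = (\<lambda>_. 0)" by (rule diff_zero_on) (simp add: cE)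
        then show ?thesis using E2[OF 3(1), of r' \<chi>] 3(2) c0[OF 3(1)] c1[OF setAt_state[OF 3(1) Wv']] by simp
      qed
    qed
  qed
  moreover have "\<chi> \<in> chains G (i - 1) j"
    unfolding chains_def
  proof (intro CollectI allI impI)
    fix S assume nz: "\<chi> S \<noteq> 0"
    then have S: "S \<in> states G" and eS: "e \<notin> fst S" and nv: "\<not> vcol G S v"
      and tz: "\<theta> (liftE (down S)) \<noteq> 0" by (auto simp: \<chi>_def split: if_splits)
    have D: "down S \<in> states G'" using down_props(1)[OF S] .
    have SD: "S = liftA False (down S)" using liftA_down[OF S eS] nv by simp
    have "ideg (liftE (down S)) = i" "jdeg G (liftE (down S)) = j" using chains_D[OF th tz] by auto
    then have "ideg (liftA False (down S)) = i - 1" "jdeg G (liftA False (down S)) = j"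
      using ideg_liftE[OF D] jdeg_liftE[OF D] ideg_liftA[OF D] jdeg_liftA[OF D] by simp_all
    then have "ideg S = i - 1" "jdeg G S = j" by (simp_all only: SD[symmetric])
    then show "S \<in> states G \<and> ideg S = i - 1 \<and> jdeg G S = j" using S by simp
  qed
  ultimately show ?thesis unfolding \<theta>_def by blast
qed

end

context pend
begin

lemma main_iso: "cohom G (rr r') i j \<cong> cohom G' r' i (j - 1)"
  unfolding cohom_pmon
proof (rule abstract_iso[where \<Phi> = Phi])
  show "addsub (cycles G (rr r') i j)" "addsub (boundaries G (rr r') i j)" "addsub (boundaries G' r' i (j - 1))"
    by (rule addsub_cycles addsub_boundaries)+
  show "Phi (\<lambda>S. x S + y S) = (\<lambda>S. Phi x S + Phi y S)" for x y
    by (simp add: Phi_def fun_eq_iff)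
  show "Phi ` cycles G (rr r') i j = cycles G' r' i (j - 1)"
  proof (intro equalityI subsetI)
    fix x assume "x \<in> Phi ` cycles G (rr r') i j"
    then obtain \<phi> where \<phi>0: "\<phi> \<in> cycles G (rr r') i j" "x = Phi \<phi>" by blast
    then have \<phi>: "\<phi> \<in> chains G i j" "diff G (rr r') \<phi> = (\<lambda>_. 0)" "x = Phi \<phi>"
      unfolding in_cycles by auto
    have "diff G' r' (Phi \<phi>) = Phi (diff G (rr r') \<phi>)" using F1[of r' \<phi>] by simp
    also have "\<dots> = Phi (\<lambda>_. 0)" using \<phi>(2) by simp
    also have "\<dots> = (\<lambda>_. 0)" by (simp add: Phi_def fun_eq_iff)
    finally have "diff G' r' (Phi \<phi>) = (\<lambda>_. 0)" .
    then show "x \<in> cycles G' r' i (j - 1)" using Phi_chains[OF \<phi>(1)] \<phi>(3)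
      unfolding in_cycles by simp
  next
    fix \<psi> assume "\<psi> \<in> cycles G' r' i (j - 1)"
    then have \<psi>: "\<psi> \<in> chains G' i (j - 1)" "diff G' r' \<psi> = (\<lambda>_. 0)" unfolding in_cycles by auto
    have "diff G (rr r') (kmap \<psi>) = (\<lambda>_. 0)" using F2[of r' \<psi>] \<psi>(2) by (simp add: kmap_def fun_eq_iff)
    then have "kmap \<psi> \<in> cycles G (rr r') i j" using kmap_chains[OF \<psi>(1)] unfolding in_cycles by simp
    moreover have "\<psi> = Phi (kmap \<psi>)" using F3[OF \<psi>(1)] by simp
    ultimately show "\<psi> \<in> Phi ` cycles G (rr r') i j" by blast
  qed
  fix \<phi> assume "\<phi> \<in> cycles G (rr r') i j"
  then have \<phi>: "\<phi> \<in> chains G i j" "diff G (rr r') \<phi> = (\<lambda>_. 0)" unfolding in_cycles by auto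
  show "Phi \<phi> \<in> boundaries G' r' i (j - 1) \<longleftrightarrow> \<phi> \<in> boundaries G (rr r') i j"
  proof
    assume "Phi \<phi> \<in> boundaries G' r' i (j - 1)"
    then obtain \<eta> where \<eta>: "\<eta> \<in> chains G' (i - 1) (j - 1)" "Phi \<phi> = diff G' r' \<eta>" unfolding in_boundaries by blast
    obtain \<chi> where \<chi>: "\<chi> \<in> chains G (i - 1) j" "(\<lambda>S. \<phi> S - kmap (Phi \<phi>) S) = diff G (rr r') \<chi>"
      using F4[OF \<phi>] by blast
    have k: "kmap (Phi \<phi>) = diff G (rr r') (kmap \<eta>)" using \<eta>(2) F2[of r' \<eta>] by simp
    have "\<phi> S = diff G (rr r') \<chi> S + diff G (rr r') (kmap \<eta>) S" for S
      using fun_cong[OF \<chi>(2), of S] k by simp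
    then have "\<phi> = diff G (rr r') (\<lambda>S. \<chi> S + kmap \<eta> S)" by (simp add: diff_add fun_eq_iff)
    moreover have "(\<lambda>S. \<chi> S + kmap \<eta> S) \<in> chains G (i - 1) j"
      using chains_add[OF \<chi>(1) kmap_chains] \<eta>(1) by simp
    ultimately show "\<phi> \<in> boundaries G (rr r') i j" unfolding in_boundaries by blast
  next
    assume "\<phi> \<in> boundaries G (rr r') i j"
    then obtain \<eta> where \<eta>: "\<eta> \<in> chains G (i - 1) j" "\<phi> = diff G (rr r') \<eta>" unfolding in_boundaries by blast
    have "Phi \<phi> = diff G' r' (Phi \<eta>)" using F1[of r' \<eta>] \<eta>(2) by simp
    then show "Phi \<phi> \<in> boundaries G' r' i (j - 1)" unfolding in_boundaries using Phi_chains[OF \<eta>(1)] by blast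
  qed
qed

lemma rr_inj: "inj_on r' (edges G') \<Longrightarrow> inj_on (rr r') (edges G)"
  unfolding inj_on_def rr_def edges' by auto

end

lemma pendant_locale:
  assumes wf: "wf_graph G" and pe: "pendant_edge G e"
  shows "\<exists>v w. pend G e v w"
proof -
  obtain v where eE: "e \<in> edges G" and v: "v \<in> ends G e" and dv: "degree G v = 1"
    using pe unfolding pendant_edge_def by blast
  let ?A = "{f \<in> edges G. v \<in> ends G f \<and> card (ends G f) = 2}"
  let ?B = "{f \<in> edges G. ends G f = {v}}"
  have fE: "finite (edges G)" using wf by (simp add: wf_graph_def)
  have d: "card ?A + 2 * card ?B = 1" using dv unfolding degree_def by simp
  have cB: "card ?B = 0" using d by linarith
  have cA: "card ?A = 1" using d cB by simp
  have B: "?B = {}" using cB fE by simp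
  have one: "card (ends G f) = 2" if f: "f \<in> edges G" "v \<in> ends G f" for f
  proof -
    have "1 \<le> card (ends G f)" "card (ends G f) \<le> 2" using wf f(1) by (auto simp: wf_graph_def)
    moreover have "card (ends G f) \<noteq> 1"
    proof
      assume "card (ends G f) = 1"
      then have "ends G f = {v}" using f(2) by (metis card_1_singletonE singletonD)
      then show False using B f(1) by blast
    qed
    ultimately show ?thesis by linarith
  qed
  have eA: "e \<in> ?A" using one[OF eE v] eE v by simp
  obtain a where a: "?A = {a}" using cA card_1_singletonE by blast
  have only: "f = e" if f: "f \<in> edges G" "v \<in> ends G f" for f
  proof -
    have "f \<in> ?A" using one[OF f] f by simp
    then have "f = a" using a by simp
    moreover have "e = a" using eA a by simp
    ultimately show ?thesis by simp
  qed
  have c2: "card (ends G e) = 2" using one[OF eE v] .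
  obtain x y where xy: "ends G e = {x,y}" "x \<noteq> y" using c2[unfolded card_2_iff] by blast
  obtain w where w: "ends G e = {v,w}" "v \<noteq> w"
  proof (cases "v = x")
    case True then show ?thesis using that xy by blast
  next
    case False then have "v = y" using v xy by blast
    then show ?thesis using that xy by (metis insert_commute)
  qed
  have "pend G e v w" by (rule pend.intro[OF wf eE w(1) w(2)]) (rule only)
  then show ?thesis by blast
qed

theorem mainTheorem10:
  fixes G :: "('v, 'e) graph" and e :: 'e
    and r :: "'e \<Rightarrow> nat" and r' :: "'e \<Rightarrow> nat"
  assumes "wf_graph G"
    and "pendant_edge G e"
    and "inj_on r (edges G)"
    and "inj_on r' (edges (contract G e))"
  shows "\<forall>i j. cohom G r i j \<cong> cohom (contract G e) r' i (j - 1)"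
proof (intro allI)
  fix i j
  obtain v w where P: "pend G e v w" using pendant_locale[OF assms(1,2)] by blast
  have "cohom G r i j \<cong> cohom G (pend.rr e r') i j"
    using twist_iso[OF assms(1) assms(3) pend.rr_inj[OF P assms(4)]] .
  also have "\<dots> \<cong> cohom (contract G e) r' i (j - 1)" using pend.main_iso[OF P] .
  finally show "cohom G r i j \<cong> cohom (contract G e) r' i (j - 1)" .
qed

end
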